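(* Consider problem (P) with $\mathcal{X}_i=\mathbb{R}^{d_i}$ for all $i$, under Assumption 1, and let $\mathcal{G}$ be undirected and connected. Then for any $\alpha,\beta>0$ and any initial point $(\mathbf{x}(0),\boldsymbol\lambda(0),\mathbf{z}(0))\in\mathbb{R}^d\times\mathbb{R}^{np}\times\mathbb{R}^{np}$ with $\sum_{i=1}^n z_i(0)=0$, the trajectory $(\mathbf{x}(t),\boldsymbol\lambda(t),\mathbf{z}(t))$ of IDEA converges to a point $(\mathbf{x}^*,\boldsymbol\lambda^*,\mathbf{z}^* )$ where $\mathbf{x}^*$ is an optimal solution of (P).
   Context: Problem (P): for $i=1,\dots,n$ let $f_i:\mathbb{R}^{d_i}\to\mathbb{R}$, $\mathcal{X}_i\subseteq\mathbb{R}^{d_i}$, $A_i\in\mathbb{R}^{p\times d_i}$, $b\in\mathbb{R}^p$; $d=\sum_i d_i$, $\mathbf{x}=[x_1^\top,\dots,x_n^\top]^\top$, $f(\mathbf{x})=\sum_i f_i(x_i)$, $A=[A_1,\dots,A_n]$, $\mathcal{X}=\prod_i\mathcal{X}_i$; (P) is $\min f(\mathbf{x})$ s.t. $A\mathbf{x}=b$, $\mathbf{x}\in\mathcal{X}$, assumed to have at least one optimal solution. Assumption 1: each $\mathcal{X}_i$ is closed and convex, $f_i$ is convex on $\mathcal{X}_i$ and differentiable on an open set containing $\mathcal{X}_i$ with $\nabla f_i$ locally Lipschitz there, and Slater's condition holds (some relative interior point of $\mathcal{X}$ satisfies $A\mathbf{x}=b$). Graph: weighted graph on $\{1,\dots,n\}$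 with adjacency matrix $[a_{ij}]$ ($a_{ij}>0$ if agent $i$ receives from agent $j$, else $0$); Laplacian $L=D^{out}-[a_{ij}]$, $D^{out}=\mathrm{diag}(\sum_j a_{ij})_i$. Undirected means $a_{ij}=a_{ji}$ for all $i,j$. IDEA: choose $b_1,\dots,b_n\in\mathbb{R}^p$ with $\sum_i b_i=b$; $\mathbf{A}=\mathrm{diag}(A_1,\dots,A_n)\in\mathbb{R}^{np\times d}$, $\mathbf{b}=[b_1^\top,\dots,b_n^\top]^\top$, $\mathbf{L}=L\otimes I_p$, $\nabla f(\mathbf{x})=[\nabla f_1(x_1)^\top,\dots,\nabla f_n(x_n)^\top]^\top$, $\boldsymbol\lambda=[\lambda_1^\top,\dots,\lambda_n^\top]^\top$, $\mathbf{z}=[z_1^\top,\dots,z_n^\top]^\top\in\mathbb{R}^{np}$. IDEA is $\dot{\mathbf{x}}=-\alpha(\nabla f(\mathbf{x})+\mathbf{A}^\top\boldsymbol\lambda)-\mathbf{A}^\top(\mathbf{A}\mathbf{x}-\mathbf{b}-\mathbf{z})$, $\dot{\boldsymbol\lambda}=\mathbf{A}\mathbf{x}-\mathbf{b}-\mathbf{z}-\beta\mathbf{L}\boldsymbol\lambda$, $\dot{\mathbf{z}}=\alpha\beta\mathbf{L}\boldsymbol\lambda$. *)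

theory Defs
  imports "HOL-Analysis.Analysis"
begin

definition loc_lipschitz_on :: "'a::metric_space set \<Rightarrow> ('a \<Rightarrow> 'b::metric_space) \<Rightarrow> bool" where
  "loc_lipschitz_on S g \<longleftrightarrow> (\<forall>x\<in>S. \<exists>e>0. \<exists>L. L-lipschitz_on (ball x e \<inter> S) g)"

definition undirected_graph :: "nat \<Rightarrow> (nat \<Rightarrow> nat \<Rightarrow> real) \<Rightarrow> bool" where
  "undirected_graph n a \<longleftrightarrow> (\<forall>i<n. \<forall>j<n. a i j \<ge> 0 \<and> a i j = a j i)"

definition graph_connected :: "nat \<Rightarrow> (nat \<Rightarrow> nat \<Rightarrow> real) \<Rightarrow> bool" where
  "graph_connected n a \<longleftrightarrow>
     (\<forall>i<n. \<forall>j<n. (\<lambda>u v. u < n \<and> v < n \<and> a u v > 0)\<^sup>*\<^sup>* i j)"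

text \<open>Block i of the Laplacian applied to a stacked vector: (L (x) I_p) lam, block i.\<close>
definition lap :: "nat \<Rightarrow> (nat \<Rightarrow> nat \<Rightarrow> real) \<Rightarrow> (nat \<Rightarrow> 'p::real_vector) \<Rightarrow> nat \<Rightarrow> 'p" where
  "lap n a lam i = (\<Sum>j<n. a i j *\<^sub>R (lam i - lam j))"

end

theory Submission
  imports Defs "Jordan_Normal_Form.Determinant"
begin


lemma lap_sum_zero:
  assumes und: "undirected_graph n a"
  shows "(\<Sum>i<n. lap n a w i) = 0"
proof -
  have "(\<Sum>i<n. lap n a w i) = (\<Sum>i<n. \<Sum>j<n. a i j *\<^sub>R w i) - (\<Sum>i<n. \<Sum>j<n. a i j *\<^sub>R w j)"
    by (simp add: lap_def scaleR_diff_right sum_subtractf)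
  also have "(\<Sum>i<n. \<Sum>j<n. a i j *\<^sub>R w j) = (\<Sum>j<n. \<Sum>i<n. a i j *\<^sub>R w j)"
    by (rule sum.swap)
  also have "\<dots> = (\<Sum>j<n. \<Sum>i<n. a j i *\<^sub>R w j)"
    using und unfolding undirected_graph_def by (intro sum.cong refl) auto
  finally show ?thesis by simp
qed

lemma lap_bilin:
  fixes u w :: "nat \<Rightarrow> 'v::real_inner"
  assumes und: "undirected_graph n a"
  shows "(\<Sum>i<n. u i \<bullet> lap n a w i) = (1/2) * (\<Sum>i<n. \<Sum>j<n. a i j * ((u i - u j) \<bullet> (w i - w j)))"
proof -
  have e1: "(\<Sum>i<n. u i \<bullet> lap n a w i) = (\<Sum>i<n. \<Sum>j<n. a i j * (u i \<bullet> (w i - w j)))"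
    by (simp add: lap_def inner_sum_right)
  have "(\<Sum>i<n. \<Sum>j<n. a i j * (u i \<bullet> (w i - w j))) = (\<Sum>j<n. \<Sum>i<n. a i j * (u i \<bullet> (w i - w j)))"
    by (rule sum.swap)
  also have "\<dots> = (\<Sum>j<n. \<Sum>i<n. a j i * (u i \<bullet> (w i - w j)))"
    using und unfolding undirected_graph_def by (intro sum.cong refl) auto
  finally have e2: "(\<Sum>i<n. \<Sum>j<n. a i j * (u i \<bullet> (w i - w j))) = (\<Sum>i<n. \<Sum>j<n. a i j * (u j \<bullet> (w j - w i)))"
    by simp
  have "(\<Sum>i<n. \<Sum>j<n. a i j * ((u i - u j) \<bullet> (w i - w j)))
      = (\<Sum>i<n. \<Sum>j<n. a i j * (u i \<bullet> (w i - w j))) + (\<Sum>i<n. \<Sum>j<n. a i j * (u j \<bullet> (w j - w i)))"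
    by (simp add: sum.distrib[symmetric] inner_diff_left inner_diff_right algebra_simps)
  then show ?thesis using e1 e2 by simp
qed

lemma lap_symm:
  fixes u w :: "nat \<Rightarrow> 'v::real_inner"
  assumes und: "undirected_graph n a"
  shows "(\<Sum>i<n. u i \<bullet> lap n a w i) = (\<Sum>i<n. w i \<bullet> lap n a u i)"
  unfolding lap_bilin[OF und]
  by (simp add: inner_commute)

definition Qf :: "nat \<Rightarrow> (nat \<Rightarrow> nat \<Rightarrow> real) \<Rightarrow> (nat \<Rightarrow> 'v::real_inner) \<Rightarrow> real" where
  "Qf n a w = (\<Sum>i<n. w i \<bullet> lap n a w i)"

lemma Qf_alt:
  assumes und: "undirected_graph n a"
  shows "Qf n a w = (1/2) * (\<Sum>i<n. \<Sum>j<n. a i j * (norm (w i - w j))\<^sup>2)"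
  unfolding Qf_def lap_bilin[OF und] by (simp add: power2_norm_eq_inner)

lemma Qf_nonneg:
  assumes und: "undirected_graph n a"
  shows "Qf n a w \<ge> 0"
  unfolding Qf_alt[OF und] using und unfolding undirected_graph_def
  by (intro mult_nonneg_nonneg sum_nonneg) auto

lemma Qf_edge:
  assumes und: "undirected_graph n a" and jk: "j < n" "k < n"
  shows "a j k * (norm (w j - w k))\<^sup>2 \<le> 2 * Qf n a w"
proof -
  have nn: "\<And>i j. i < n \<Longrightarrow> j < n \<Longrightarrow> 0 \<le> a i j * (norm (w i - w j))\<^sup>2"
    using und unfolding undirected_graph_def by auto
  have "a j k * (norm (w j - w k))\<^sup>2 \<le> (\<Sum>jj<n. a j jj * (norm (w j - w jj))\<^sup>2)"
    using jk nn by (intro member_le_sum) auto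
  also have "\<dots> \<le> (\<Sum>i<n. \<Sum>jj<n. a i jj * (norm (w i - w jj))\<^sup>2)"
    using jk nn by (intro member_le_sum sum_nonneg) auto
  finally show ?thesis unfolding Qf_alt[OF und] by simp
qed

lemma path_bound_pair:
  assumes und: "undirected_graph n a"
    and path: "(\<lambda>u v. u < n \<and> v < n \<and> a u v > 0)\<^sup>*\<^sup>* i j" and i: "i < n"
  shows "\<exists>C\<ge>0. \<forall>w::nat \<Rightarrow> 'v::real_inner. norm (w i - w j) \<le> C * sqrt (Qf n a w)"
  using path
proof (induction rule: rtranclp_induct)
  case base
  then show ?case by (intro exI[of _ 0]) auto
next
  case (step j k)
  from step.IH obtain C where C: "C \<ge> 0" "\<forall>w::nat \<Rightarrow> 'v. norm (w i - w j) \<le> C * sqrt (Qf n a w)" by auto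
  have jk: "j < n" "k < n" "a j k > 0" using step.hyps by auto
  define D where "D = sqrt (2 / a j k)"
  have D: "D \<ge> 0" unfolding D_def using jk by auto
  have edge: "norm (w j - w k) \<le> D * sqrt (Qf n a w)" for w :: "nat \<Rightarrow> 'v"
  proof -
    have "a j k * (norm (w j - w k))\<^sup>2 \<le> 2 * Qf n a w" by (rule Qf_edge[OF und jk(1,2)])
    then have "(norm (w j - w k))\<^sup>2 \<le> (2 / a j k) * Qf n a w"
      using jk(3) by (simp add: field_simps)
    then have "sqrt ((norm (w j - w k))\<^sup>2) \<le> sqrt ((2 / a j k) * Qf n a w)"
      using real_sqrt_le_mono by blast
    moreover have "sqrt ((2 / a j k) * Qf n a w) = D * sqrt (Qf n a w)"
      unfolding D_def by (rule real_sqrt_mult)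
    ultimately show ?thesis by simp
  qed
  show ?case
  proof (intro exI[of _ "C + D"] conjI allI)
    show "0 \<le> C + D" using C D by simp
    fix w :: "nat \<Rightarrow> 'v"
    have "norm (w i - w k) \<le> norm (w i - w j) + norm (w j - w k)"
      using norm_triangle_ineq[of "w i - w j" "w j - w k"] by simp
    also have "\<dots> \<le> C * sqrt (Qf n a w) + D * sqrt (Qf n a w)"
      using C(2) edge[of w] by (intro add_mono) auto
    finally show "norm (w i - w k) \<le> (C + D) * sqrt (Qf n a w)" by (simp add: algebra_simps)
  qed
qed

lemma path_bound:
  assumes und: "undirected_graph n a" and conn: "graph_connected n a"
  shows "\<exists>C\<ge>0. \<forall>w::nat \<Rightarrow> 'v::real_inner. \<forall>i<n. \<forall>j<n. norm (w i - w j) \<le> C * sqrt (Qf n a w)"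
proof -
  have "\<forall>p\<in>{..<n} \<times> {..<n}. \<exists>C\<ge>0. \<forall>w::nat \<Rightarrow> 'v. norm (w (fst p) - w (snd p)) \<le> C * sqrt (Qf n a w)"
  proof
    fix p assume "p \<in> {..<n} \<times> {..<n}"
    then obtain i j where p: "p = (i,j)" "i < n" "j < n" by auto
    have "(\<lambda>u v. u < n \<and> v < n \<and> a u v > 0)\<^sup>*\<^sup>* i j" using conn p unfolding graph_connected_def by auto
    from path_bound_pair[OF und this p(2)]
    show "\<exists>C\<ge>0. \<forall>w::nat \<Rightarrow> 'v. norm (w (fst p) - w (snd p)) \<le> C * sqrt (Qf n a w)" using p by simp
  qed
  from bchoice[OF this] obtain Cf where Cf0: "\<forall>p\<in>{..<n} \<times> {..<n}. Cf p \<ge> 0 \<and> (\<forall>w::nat \<Rightarrow> 'v. norm (w (fst p) - w (snd p)) \<le> Cf p * sqrt (Qf n a w))"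
    by blast
  then have Cf: "\<And>p. p \<in> {..<n} \<times> {..<n} \<Longrightarrow> Cf p \<ge> 0 \<and> (\<forall>w::nat \<Rightarrow> 'v. norm (w (fst p) - w (snd p)) \<le> Cf p * sqrt (Qf n a w))"
    by blast
  define C where "C = (\<Sum>p\<in>{..<n} \<times> {..<n}. Cf p)"
  have C0: "C \<ge> 0" unfolding C_def using Cf by (intro sum_nonneg) auto
  show ?thesis
  proof (intro exI[of _ C] conjI allI impI)
    show "0 \<le> C" by (rule C0)
    fix w :: "nat \<Rightarrow> 'v" and i j assume ij: "i < n" "j < n"
    have c1: "Cf (i,j) \<le> C" unfolding C_def using Cf ij by (intro member_le_sum) auto
    have c2: "norm (w i - w j) \<le> Cf (i,j) * sqrt (Qf n a w)" using Cf[of "(i,j)"] ij by auto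
    have "sqrt (Qf n a w) \<ge> 0" using Qf_nonneg[OF und] by simp
    from mult_right_mono[OF c1 this] c2
    show "norm (w i - w j) \<le> C * sqrt (Qf n a w)" by linarith
  qed
qed

lemma Qf_zero_consensus:
  assumes und: "undirected_graph n a" and conn: "graph_connected n a"
    and "Qf n a (w::nat \<Rightarrow> 'v::real_inner) = 0" and "i < n" "j < n"
  shows "w i = w j"
proof -
  obtain C where "\<forall>w::nat \<Rightarrow> 'v. \<forall>i<n. \<forall>j<n. norm (w i - w j) \<le> C * sqrt (Qf n a w)"
    using path_bound[OF und conn] by auto
  then have "norm (w i - w j) \<le> C * sqrt (Qf n a w)" using assms by blast
  then have "norm (w i - w j) \<le> 0" using assms by simp
  then show ?thesis by simp
qed

lemma lap_zero_consensus:
  assumes und: "undirected_graph n a" and conn: "graph_connected n a"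
    and "\<forall>i<n. lap n a (w::nat \<Rightarrow> 'v::real_inner) i = 0" and "i < n" "j < n"
  shows "w i = w j"
  using assms by (intro Qf_zero_consensus[OF und conn]) (auto simp: Qf_def)

lemma lap_surj_scalar:
  fixes c :: "nat \<Rightarrow> real"
  assumes und: "undirected_graph n a" and conn: "graph_connected n a" and n: "n > 0"
    and cs: "(\<Sum>i<n. c i) = 0"
  shows "\<exists>w::nat \<Rightarrow> real. \<forall>i<n. lap n a w i = c i"
proof -
  define M :: "real mat" where "M = mat n n (\<lambda>(i,j). (if i = j then (\<Sum>k<n. a i k) else 0) - a i j + 1 / real n)"
  have Mc: "M \<in> carrier_mat n n" unfolding M_def by simp
  have Mv: "(M *\<^sub>v v) $ i = lap n a (\<lambda>j. v $ j) i + (1 / real n) * (\<Sum>j<n. v $ j)"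
    if v: "v \<in> carrier_vec n" and i: "i < n" for v i
  proof -
    have "(M *\<^sub>v v) $ i = (\<Sum>j<n. ((if i = j then (\<Sum>k<n. a i k) else 0) - a i j + 1 / real n) * v $ j)"
      using v i unfolding M_def row_def lessThan_atLeast0 by (auto simp: scalar_prod_def intro!: sum.cong)
    also have "\<dots> = (\<Sum>j<n. (if i = j then (\<Sum>k<n. a i k) else 0) * v $ j) - (\<Sum>j<n. a i j * v $ j) + (1 / real n) * (\<Sum>j<n. v $ j)"
      by (simp add: algebra_simps sum.distrib sum_subtractf sum_distrib_left)
    also have "(\<Sum>j<n. (if i = j then (\<Sum>k<n. a i k) else 0) * v $ j) = (\<Sum>k<n. a i k) * v $ i"
    proof -
      have "(\<Sum>j<n. (if i = j then (\<Sum>k<n. a i k) else 0) * v $ j) = (\<Sum>j<n. if i = j then (\<Sum>k<n. a i k) * v $ j else 0)"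
        by (intro sum.cong) auto
      also have "\<dots> = (\<Sum>k<n. a i k) * v $ i" using i by (simp add: sum.delta)
      finally show ?thesis .
    qed
    also have "(\<Sum>k<n. a i k) * v $ i - (\<Sum>j<n. a i j * v $ j) = lap n a (\<lambda>j. v $ j) i"
      by (simp add: lap_def sum_distrib_left sum_distrib_right sum_subtractf algebra_simps)
    finally show ?thesis .
  qed
  have inj: "v = 0\<^sub>v n" if v: "v \<in> carrier_vec n" and Mv0: "M *\<^sub>v v = 0\<^sub>v n" for v
  proof -
    let ?w = "\<lambda>j. v $ j"
    let ?S = "\<Sum>j<n. v $ j"
    have eq: "lap n a ?w i + (1 / real n) * ?S = 0" if "i < n" for i
      using Mv[OF v that] Mv0 that by (metis index_zero_vec(1))
    have "(\<Sum>i<n. lap n a ?w i + (1 / real n) * ?S) = 0" using eq by simp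
    then have "(\<Sum>i<n. lap n a ?w i) + ?S = 0" using n by (simp add: sum.distrib)
    then have S0: "?S = 0" using lap_sum_zero[OF und, of ?w] by simp
    then have "\<forall>i<n. lap n a ?w i = 0" using eq by simp
    then have cons: "\<And>i. i < n \<Longrightarrow> v $ i = v $ 0" using lap_zero_consensus[OF und conn, of ?w _ 0] n by blast
    have "?S = (\<Sum>j<n. v $ 0)" by (intro sum.cong refl cons) simp
    then have "?S = real n * v $ 0" by simp
    then have "v $ 0 = 0" using S0 n by simp
    then have z: "\<And>i. i < n \<Longrightarrow> v $ i = 0" using cons by metis
    show ?thesis using z v by (intro eq_vecI) auto
  qed
  have "det M \<noteq> 0"
  proof
    assume "det M = 0"
    then obtain v where "v \<in> carrier_vec n" "v \<noteq> 0\<^sub>v n" "M *\<^sub>v v = 0\<^sub>v n"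
      using det_0_iff_vec_prod_zero[OF Mc] by auto
    then show False using inj by auto
  qed
  then have "M \<in> Units (ring_mat TYPE(real) n undefined)" by (rule det_non_zero_imp_unit[OF Mc])
  then obtain B where B: "B \<in> carrier_mat n n" "M * B = 1\<^sub>m n"
    unfolding Units_def ring_mat_def by auto
  define cv where "cv = vec n c"
  define v where "v = B *\<^sub>v cv"
  have v: "v \<in> carrier_vec n" unfolding v_def cv_def using B by simp
  have "M *\<^sub>v v = (M * B) *\<^sub>v cv" unfolding v_def
    by (rule assoc_mult_mat_vec[OF Mc B(1), symmetric]) (simp add: cv_def)
  also have "\<dots> = cv" using B unfolding cv_def by simp
  finally have Mvc: "M *\<^sub>v v = cv" .
  let ?w = "\<lambda>j. v $ j"
  let ?S = "\<Sum>j<n. v $ j"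
  have eq: "lap n a ?w i + (1 / real n) * ?S = c i" if "i < n" for i
    using Mv[OF v that] Mvc that unfolding cv_def by simp
  have "(\<Sum>i<n. lap n a ?w i + (1 / real n) * ?S) = (\<Sum>i<n. c i)" using eq by simp
  then have "(\<Sum>i<n. lap n a ?w i) + ?S = 0" using n cs by (simp add: sum.distrib)
  then have S0: "?S = 0" using lap_sum_zero[OF und, of ?w] by simp
  show ?thesis using eq S0 by (intro exI[of _ ?w]) auto
qed

lemma lap_surj:
  fixes c :: "nat \<Rightarrow> real^'p"
  assumes und: "undirected_graph n a" and conn: "graph_connected n a" and n: "n > 0"
    and cs: "(\<Sum>i<n. c i) = 0"
  shows "\<exists>w. \<forall>i<n. lap n a w i = c i"
proof -
  have "\<forall>r. \<exists>w::nat \<Rightarrow> real. \<forall>i<n. lap n a w i = c i $ r"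
  proof
    fix r
    have "(\<Sum>i<n. c i $ r) = 0" using arg_cong[OF cs, of "\<lambda>v. v $ r"] by (simp add: sum_component)
    then show "\<exists>w::nat \<Rightarrow> real. \<forall>i<n. lap n a w i = c i $ r"
      by (rule lap_surj_scalar[OF und conn n])
  qed
  then obtain W where W0: "\<forall>r. \<forall>i<n. lap n a (W r) i = c i $ r" by (rule choice[THEN exE]) blast
  then have W: "\<And>r i. i < n \<Longrightarrow> lap n a (W r) i = c i $ r" by blast
  define w where "w = (\<lambda>i. \<chi> r. W r i)"
  have "lap n a w i = c i" if "i < n" for i
  proof -
    have "lap n a w i $ r = c i $ r" for r
      using W[OF that, of r] unfolding w_def lap_def by (simp add: sum_component)
    then show ?thesis by (simp add: Finite_Cartesian_Product.vec_eq_iff)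
  qed
  then show ?thesis by auto
qed

no_notation Matrix.scalar_prod (infix \<open>\<bullet>\<close> 70)
no_notation Matrix.vec_index (infixl \<open>$\<close> 100)




lemma deriv_nonpos_mono:
  fixes V D :: "real \<Rightarrow> real"
  assumes a0: "0 \<le> a" and ab: "a \<le> b"
    and der: "\<And>s. s \<in> {a..b} \<Longrightarrow> (V has_real_derivative D s) (at s within {0..})"
    and nonpos: "\<And>s. s \<in> {a..b} \<Longrightarrow> D s \<le> 0"
  shows "V b \<le> V a"
proof -
  have "continuous (at s within {a..b}) V" if "s \<in> {a..b}" for s
  proof -
    have "continuous (at s within {0..}) V" using der[OF that] by (rule DERIV_continuous)
    moreover have "{a..b} \<subseteq> {0..}" using a0 by auto
    ultimately show ?thesis by (rule continuous_within_subset)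
  qed
  then have cont: "continuous_on {a..b} V" using continuous_on_eq_continuous_within by blast
  have "\<exists>y. DERIV V s :> y \<and> y \<le> 0" if "a < s" "s < b" for s
  proof -
    have "s \<in> interior {0..}" using that a0 by simp
    then have "at s within {0..} = at s" by (rule at_within_interior)
    then show ?thesis using der[of s] nonpos[of s] that by auto
  qed
  then show ?thesis using DERIV_nonpos_imp_decreasing_open[OF ab _ cont] by blast
qed

lemma has_vector_derivative_inner_real:
  fixes u v :: "real \<Rightarrow> 'a::real_inner"
  assumes "(u has_vector_derivative u') (at t within S)" "(v has_vector_derivative v') (at t within S)"
  shows "((\<lambda>s. u s \<bullet> v s) has_real_derivative (u' \<bullet> v t + u t \<bullet> v')) (at t within S)"
proof -
  have "((\<lambda>s. u s \<bullet> v s) has_derivative (\<lambda>h. u t \<bullet> (h *\<^sub>R v') + (h *\<^sub>R u') \<bullet> v t)) (at t within S)"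
    using has_derivative_inner[OF assms(1)[unfolded has_vector_derivative_def] assms(2)[unfolded has_vector_derivative_def]] .
  moreover have "(\<lambda>h. u t \<bullet> (h *\<^sub>R v') + (h *\<^sub>R u') \<bullet> v t) = (*) (u' \<bullet> v t + u t \<bullet> v')"
    by (rule ext) (simp add: algebra_simps)
  ultimately show ?thesis unfolding has_field_derivative_def by simp
qed

lemma has_vector_derivative_norm_sq:
  fixes u :: "real \<Rightarrow> 'a::real_inner"
  assumes "(u has_vector_derivative u') (at t within S)"
  shows "((\<lambda>s. (norm (u s))\<^sup>2) has_real_derivative (2 * (u t \<bullet> u'))) (at t within S)"
proof -
  have "((\<lambda>s. u s \<bullet> u s) has_real_derivative (u' \<bullet> u t + u t \<bullet> u')) (at t within S)"
    by (rule has_vector_derivative_inner_real[OF assms assms])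
  then show ?thesis by (simp add: power2_norm_eq_inner inner_commute)
qed

lemma convex_grad_ineq:
  fixes \<phi> :: "'a::real_inner \<Rightarrow> real"
  assumes cvx: "convex_on UNIV \<phi>" and der: "\<And>u. (\<phi> has_derivative (\<lambda>h. gr u \<bullet> h)) (at u)"
  shows "\<phi> v \<ge> \<phi> u + gr u \<bullet> (v - u)"
proof -
  define \<psi> where "\<psi> = (\<lambda>s::real. \<phi> (u + s *\<^sub>R (v - u)))"
  have cpsi: "convex_on UNIV \<psi>"
  proof (rule convex_onI)
    fix t s1 s2 :: real assume t: "0 < t" "t < 1"
    have eq: "u + ((1 - t) *\<^sub>R s1 + t *\<^sub>R s2) *\<^sub>R (v - u) = (1 - t) *\<^sub>R (u + s1 *\<^sub>R (v - u)) + t *\<^sub>R (u + s2 *\<^sub>R (v - u))"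
      by (simp add: algebra_simps)
    show "\<psi> ((1 - t) *\<^sub>R s1 + t *\<^sub>R s2) \<le> (1 - t) * \<psi> s1 + t * \<psi> s2"
      unfolding \<psi>_def eq using t by (intro convex_onD[OF cvx]) auto
  qed simp
  have d1: "((\<lambda>s::real. u + s *\<^sub>R (v - u)) has_derivative (\<lambda>s. s *\<^sub>R (v - u))) (at 0)"
    by (auto intro!: derivative_eq_intros)
  have d2: "(\<phi> has_derivative (\<lambda>h. gr u \<bullet> h)) (at ((\<lambda>s::real. u + s *\<^sub>R (v - u)) 0))"
    using der[of u] by simp
  have "(\<psi> has_derivative (\<lambda>s. gr u \<bullet> (s *\<^sub>R (v - u)))) (at 0)"
    unfolding \<psi>_def using has_derivative_compose[OF d1 d2] .
  moreover have "(\<lambda>s. gr u \<bullet> (s *\<^sub>R (v - u))) = (*) (gr u \<bullet> (v - u))"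
    by (rule ext) simp
  ultimately have "(\<psi> has_field_derivative (gr u \<bullet> (v - u))) (at 0 within UNIV)"
    unfolding has_field_derivative_def by simp
  from convex_on_imp_above_tangent[OF cpsi connected_UNIV _ _ this, of 1]
  have "\<psi> 1 - \<psi> 0 \<ge> gr u \<bullet> (v - u) * (1 - 0)" by simp
  then show ?thesis unfolding \<psi>_def by simp
qed

lemma fermat_dir:
  fixes \<phi> :: "'a::real_inner \<Rightarrow> real"
  assumes der: "(\<phi> has_derivative (\<lambda>h. gv \<bullet> h)) (at u)"
    and mn: "\<And>s::real. \<phi> u \<le> \<phi> (u + s *\<^sub>R d)"
  shows "gv \<bullet> d = 0"
proof -
  define \<psi> where "\<psi> = (\<lambda>s::real. \<phi> (u + s *\<^sub>R d))"
  have d1: "((\<lambda>s::real. u + s *\<^sub>R d) has_derivative (\<lambda>s. s *\<^sub>R d)) (at 0)"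
    by (auto intro!: derivative_eq_intros)
  have d2: "(\<phi> has_derivative (\<lambda>h. gv \<bullet> h)) (at ((\<lambda>s::real. u + s *\<^sub>R d) 0))"
    using der by simp
  have "(\<psi> has_derivative (\<lambda>s. gv \<bullet> (s *\<^sub>R d))) (at 0)"
    unfolding \<psi>_def using has_derivative_compose[OF d1 d2] .
  moreover have "(\<lambda>s. gv \<bullet> (s *\<^sub>R d)) = (*) (gv \<bullet> d)"
    by (rule ext) simp
  ultimately have D: "DERIV \<psi> 0 :> (gv \<bullet> d)"
    unfolding has_field_derivative_def by simp
  have "\<forall>y. \<bar>0 - y\<bar> < 1 \<longrightarrow> \<psi> 0 \<le> \<psi> y" unfolding \<psi>_def using mn by simp
  from DERIV_local_min[OF D _ this] show ?thesis by simp
qed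

lemma inner_transpose_mv:
  fixes M :: "real^'n^'m"
  shows "u \<bullet> (transpose M *v w) = (M *v u) \<bullet> w"
proof -
  have "u \<bullet> (transpose M *v w) = (w v* M) \<bullet> u" by (simp add: inner_commute)
  also have "\<dots> = w \<bullet> (M *v u)" by (rule dot_lmul_matrix)
  finally show ?thesis by (simp add: inner_commute)
qed

lemma bounded_sum_comp:
  fixes f :: "'i \<Rightarrow> 'a \<Rightarrow> 'b::real_normed_vector"
  assumes "\<And>i. i \<in> I \<Longrightarrow> bounded (f i ` S)"
  shows "bounded ((\<lambda>t. \<Sum>i\<in>I. f i t) ` S)"
  using assms
proof (induction I rule: infinite_finite_induct)
  case (infinite I)
  have eq: "(\<lambda>t. \<Sum>i\<in>I. f i t) = (\<lambda>t. 0)" using infinite by simp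
  show ?case unfolding eq unfolding bounded_iff by (intro exI[of _ 0]) auto
next
  case empty show ?case unfolding bounded_iff by (intro exI[of _ 0]) auto
next
  case (insert i I)
  have "bounded ((\<lambda>t. f i t + (\<Sum>i\<in>I. f i t)) ` S)"
    using insert by (intro bounded_plus_comp) auto
  then show ?case using insert by simp
qed

lemma bounded_mv_comp:
  fixes M :: "real^'n^'m"
  assumes "bounded (f ` S)"
  shows "bounded ((\<lambda>t. M *v f t) ` S)"
proof -
  have "bounded ((*v) M ` (f ` S))" by (rule bounded_linear_image[OF assms]) simp
  then show ?thesis by (simp add: image_image)
qed

lemma bounded_scale_comp:
  fixes f :: "'a \<Rightarrow> 'b::real_normed_vector"
  assumes "bounded (f ` S)"
  shows "bounded ((\<lambda>t. c *\<^sub>R f t) ` S)"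
proof -
  have "bounded ((\<lambda>x. c *\<^sub>R x) ` (f ` S))" by (rule bounded_scaling[OF assms])
  then show ?thesis by (simp add: image_image)
qed

lemma uc_inner:
  fixes u v :: "real \<Rightarrow> 'a::real_inner"
  assumes uu: "uniformly_continuous_on S u" and uv: "uniformly_continuous_on S v"
    and bu: "bounded (u ` S)" and bv: "bounded (v ` S)"
  shows "uniformly_continuous_on S (\<lambda>t. u t \<bullet> v t)"
proof -
  obtain Bu where Bu: "Bu > 0" "\<And>t. t \<in> S \<Longrightarrow> norm (u t) \<le> Bu"
    using bu by (auto simp: bounded_pos)
  obtain Bv where Bv: "Bv > 0" "\<And>t. t \<in> S \<Longrightarrow> norm (v t) \<le> Bv"
    using bv by (auto simp: bounded_pos)
  show ?thesis unfolding uniformly_continuous_on_def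
  proof (intro allI impI)
    fix e :: real assume e: "e > 0"
    have e1: "e / (2 * Bv) > 0" using e Bv by simp
    have e2: "e / (2 * Bu) > 0" using e Bu by simp
    obtain d1 where d1: "d1 > 0" "\<forall>x\<in>S. \<forall>x'\<in>S. dist x' x < d1 \<longrightarrow> dist (u x') (u x) < e / (2 * Bv)"
      using uu e1 unfolding uniformly_continuous_on_def by blast
    obtain d2 where d2: "d2 > 0" "\<forall>x\<in>S. \<forall>x'\<in>S. dist x' x < d2 \<longrightarrow> dist (v x') (v x) < e / (2 * Bu)"
      using uv e2 unfolding uniformly_continuous_on_def by blast
    show "\<exists>d>0. \<forall>x\<in>S. \<forall>x'\<in>S. dist x' x < d \<longrightarrow> dist (u x' \<bullet> v x') (u x \<bullet> v x) < e"
    proof (intro exI[of _ "min d1 d2"] conjI ballI impI)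
      show "min d1 d2 > 0" using d1 d2 by simp
      fix x x' assume xs: "x \<in> S" "x' \<in> S" and dx: "dist x' x < min d1 d2"
      have n1: "norm (u x' - u x) < e / (2 * Bv)" using d1 xs dx by (auto simp: dist_norm)
      have n2: "norm (v x' - v x) < e / (2 * Bu)" using d2 xs dx by (auto simp: dist_norm)
      have "u x' \<bullet> v x' - u x \<bullet> v x = (u x' - u x) \<bullet> v x' + u x \<bullet> (v x' - v x)"
        by (simp add: algebra_simps)
      then have "\<bar>u x' \<bullet> v x' - u x \<bullet> v x\<bar> \<le> \<bar>(u x' - u x) \<bullet> v x'\<bar> + \<bar>u x \<bullet> (v x' - v x)\<bar>"
        by simp
      also have "\<dots> \<le> norm (u x' - u x) * norm (v x') + norm (u x) * norm (v x' - v x)"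
        by (intro add_mono Cauchy_Schwarz_ineq2)
      also have "\<dots> \<le> norm (u x' - u x) * Bv + Bu * norm (v x' - v x)"
        using Bu Bv xs by (intro add_mono mult_left_mono mult_right_mono) auto
      also have "\<dots> < (e / (2 * Bv)) * Bv + Bu * (e / (2 * Bu))"
        using n1 n2 Bu Bv by (intro add_strict_mono mult_strict_left_mono mult_strict_right_mono) auto
      also have "\<dots> = e" using Bu Bv by (simp add: field_simps)
      finally show "dist (u x' \<bullet> v x') (u x \<bullet> v x) < e" by (simp add: dist_real_def)
    qed
  qed
qed

lemma uc_of_deriv:
  fixes f :: "real \<Rightarrow> 'a::real_normed_vector"
  assumes der: "\<And>t. t \<ge> 0 \<Longrightarrow> (f has_vector_derivative f' t) (at t within {0..})"
    and bd: "\<And>t. t \<ge> 0 \<Longrightarrow> norm (f' t) \<le> B"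
  shows "uniformly_continuous_on {0..} f"
proof -
  have lip: "norm (f s - f t) \<le> B * norm (s - t)" if "s \<ge> 0" "t \<ge> 0" for s t
  proof (rule differentiable_bound[of "{0..}" f "\<lambda>t h. h *\<^sub>R f' t"])
    show "convex {0::real..}" by simp
    show "(f has_derivative (\<lambda>h. h *\<^sub>R f' x)) (at x within {0..})" if "x \<in> {0..}" for x
      using der[of x] that unfolding has_vector_derivative_def by simp
    show "onorm (\<lambda>h. h *\<^sub>R f' x) \<le> B" if "x \<in> {0..}" for x
      using bd[of x] that onorm_scaleR_left[OF bounded_linear_ident, of "f' x"] by (simp add: onorm_id)
  qed (use that in auto)
  have B0: "B \<ge> 0" using bd[of 0] norm_ge_zero[of "f' 0"] by linarith
  show ?thesis unfolding uniformly_continuous_on_def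
  proof (intro allI impI)
    fix e :: real assume e: "e > 0"
    show "\<exists>d>0. \<forall>x\<in>{0..}. \<forall>x'\<in>{0..}. dist x' x < d \<longrightarrow> dist (f x') (f x) < e"
    proof (intro exI[of _ "e / (B + 1)"] conjI ballI impI)
      show "e / (B + 1) > 0" using e B0 by simp
      fix x x' :: real assume xs: "x \<in> {0..}" "x' \<in> {0..}" and dx: "dist x' x < e / (B + 1)"
      have "dist (f x') (f x) \<le> B * dist x' x" using lip[of x' x] xs by (simp add: dist_norm)
      also have "\<dots> \<le> (B + 1) * dist x' x" by (simp add: distrib_right)
      also have "\<dots> < (B + 1) * (e / (B + 1))" using dx B0 by (intro mult_strict_left_mono) auto
      also have "\<dots> = e" using B0 by simp
      finally show "dist (f x') (f x) < e" .
    qed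
  qed
qed

lemma uc_compose_cont:
  fixes u :: "real \<Rightarrow> 'a::euclidean_space" and G :: "'a \<Rightarrow> 'b::real_normed_vector"
  assumes uu: "uniformly_continuous_on S u" and bu: "bounded (u ` S)" and cG: "continuous_on UNIV G"
  shows "uniformly_continuous_on S (\<lambda>t. G (u t))" "bounded ((\<lambda>t. G (u t)) ` S)"
proof -
  obtain B where B: "\<And>t. t \<in> S \<Longrightarrow> norm (u t) \<le> B" using bu by (auto simp: bounded_iff)
  have sub: "u ` S \<subseteq> cball 0 B" using B by auto
  have UC: "uniformly_continuous_on (cball 0 B) G"
    by (rule compact_uniformly_continuous) (auto intro: continuous_on_subset[OF cG])
  have "uniformly_continuous_on (u ` S) G" unfolding uniformly_continuous_on_def
  proof (intro allI impI)
    fix e :: real assume "e > 0"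
    then obtain d where d: "d > 0" "\<forall>x\<in>cball 0 B. \<forall>x'\<in>cball 0 B. dist x' x < d \<longrightarrow> dist (G x') (G x) < e"
      using UC unfolding uniformly_continuous_on_def by blast
    show "\<exists>d>0. \<forall>x\<in>u ` S. \<forall>x'\<in>u ` S. dist x' x < d \<longrightarrow> dist (G x') (G x) < e"
      using d sub by (intro exI[of _ d]) blast
  qed
  then show "uniformly_continuous_on S (\<lambda>t. G (u t))" by (rule uniformly_continuous_on_compose[OF uu])
  have "compact (G ` cball 0 B)" by (rule compact_continuous_image) (auto intro: continuous_on_subset[OF cG])
  then have "bounded (G ` cball 0 B)" by (rule compact_imp_bounded)
  moreover have "(\<lambda>t. G (u t)) ` S \<subseteq> G ` cball 0 B" using sub by auto
  ultimately show "bounded ((\<lambda>t. G (u t)) ` S)" by (rule bounded_subset)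
qed

lemma barbalat1:
  fixes V h :: "real \<Rightarrow> real"
  assumes der: "\<And>t. t \<ge> 0 \<Longrightarrow> (V has_real_derivative (- h t)) (at t within {0..})"
    and hnn: "\<And>t. t \<ge> 0 \<Longrightarrow> h t \<ge> 0"
    and huc: "uniformly_continuous_on {0..} h"
    and Vlb: "\<And>t. t \<ge> 0 \<Longrightarrow> V t \<ge> 0"
  shows "(h \<longlongrightarrow> 0) at_top"
proof (rule ccontr)
  assume nt: "\<not> (h \<longlongrightarrow> 0) at_top"
  have mono: "V t \<le> V s" if "0 \<le> s" "s \<le> t" for s t
    using that by (intro deriv_nonpos_mono[OF that der]) (auto intro: hnn)
  define L where "L = Inf (V ` {0..})"
  have bdd: "bdd_below (V ` {0..})" using Vlb by (intro bdd_belowI[where m=0]) auto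
  have VL: "L \<le> V t" if "t \<ge> 0" for t unfolding L_def using bdd that by (auto intro: cInf_lower)
  have ex: "\<exists>T\<ge>0. V T < L + c" if "c > 0" for c
  proof -
    have "\<exists>y\<in>V ` {0..}. y < L + c" unfolding L_def
      by (rule cInf_lessD) (use that in auto)
    then show ?thesis by auto
  qed
  from nt obtain e where e: "e > 0" and freq: "\<forall>T. \<exists>t\<ge>T. h t \<ge> e"
  proof -
    have "\<not> (\<forall>e>0. eventually (\<lambda>t. dist (h t) 0 < e) at_top)" using nt by (simp add: tendsto_iff)
    then obtain e where "e > 0" "\<not> eventually (\<lambda>t. dist (h t) 0 < e) at_top" by auto
    then have ev: "\<forall>T. \<exists>t\<ge>T. \<not> dist (h t) 0 < e" by (auto simp: eventually_at_top_linorder)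
    have "\<forall>T. \<exists>t\<ge>T. h t \<ge> e"
    proof
      fix T :: real
      obtain t where t: "t \<ge> max T 0" "\<not> dist (h t) 0 < e" using ev by blast
      then have "t \<ge> 0" by simp
      then have "h t \<ge> e" using t(2) hnn[of t] by (simp add: dist_real_def)
      then show "\<exists>t\<ge>T. h t \<ge> e" using t(1) by (intro exI[of _ t]) simp
    qed
    then show ?thesis using that \<open>e > 0\<close> by blast
  qed
  obtain d where d: "d > 0" "\<forall>x\<in>{0..}. \<forall>x'\<in>{0..}. dist x' x < d \<longrightarrow> dist (h x') (h x) < e / 2"
    using huc e unfolding uniformly_continuous_on_def by (metis half_gt_zero)
  obtain T where T: "T \<ge> 0" "V T < L + e * d / 4" using ex[of "e * d / 4"] e d by auto
  obtain t where t: "t \<ge> T" "h t \<ge> e" using freq by auto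
  have t0: "t \<ge> 0" using t T by simp
  have hbig: "h s \<ge> e / 2" if "s \<in> {t..t + d/2}" for s
  proof -
    have "dist s t < d" using that d by (auto simp: dist_real_def)
    then have "dist (h s) (h t) < e / 2" using d that t0 by auto
    then have "\<bar>h s - h t\<bar> < e / 2" by (simp add: dist_real_def)
    then have "h t - h s < e / 2" unfolding abs_less_iff by linarith
    then show ?thesis using t by linarith
  qed
  have "(\<lambda>s. V s + (e/2) * s) (t + d/2) \<le> (\<lambda>s. V s + (e/2) * s) t"
  proof (rule deriv_nonpos_mono[of t "t + d/2" _ "\<lambda>s. - h s + e/2"])
    show "0 \<le> t" by (rule t0)
    show "t \<le> t + d/2" using d by simp
    fix s assume s: "s \<in> {t..t + d/2}"
    show "((\<lambda>s. V s + e / 2 * s) has_real_derivative - h s + e / 2) (at s within {0..})"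
      using s t0 by (auto intro!: derivative_eq_intros der)
    show "- h s + e / 2 \<le> 0" using hbig[OF s] by simp
  qed
  then have "V (t + d/2) \<le> V t - e * d / 4" by (simp add: algebra_simps)
  also have "V t \<le> V T" using mono T t by simp
  finally have "V (t + d/2) < L" using T by simp
  moreover have "L \<le> V (t + d/2)" using VL t0 d by simp
  ultimately show False by simp
qed

lemma barbalat2:
  fixes e :: "real \<Rightarrow> 'a::real_inner"
  assumes lim: "(e \<longlongrightarrow> 0) at_top"
    and der: "\<And>t. t \<ge> 0 \<Longrightarrow> (e has_vector_derivative e' t) (at t within {0..})"
    and uc: "uniformly_continuous_on {0..} e'"
  shows "(e' \<longlongrightarrow> 0) at_top"
proof (rule ccontr)
  assume nt: "\<not> (e' \<longlongrightarrow> 0) at_top"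
  from nt obtain \<epsilon> where eps: "\<epsilon> > 0" and freq: "\<forall>T. \<exists>t\<ge>T. norm (e' t) \<ge> \<epsilon>"
  proof -
    have "\<not> (\<forall>c>0. eventually (\<lambda>t. dist (e' t) 0 < c) at_top)" using nt by (simp add: tendsto_iff)
    then obtain c where "c > 0" "\<not> eventually (\<lambda>t. dist (e' t) 0 < c) at_top" by auto
    then have "\<forall>T. \<exists>t\<ge>T. norm (e' t) \<ge> c" by (auto simp: eventually_at_top_linorder dist_norm not_less)
    then show ?thesis using that \<open>c > 0\<close> by blast
  qed
  obtain d where d: "d > 0" "\<forall>x\<in>{0..}. \<forall>x'\<in>{0..}. dist x' x < d \<longrightarrow> dist (e' x') (e' x) < \<epsilon> / 2"
    using uc eps unfolding uniformly_continuous_on_def by (metis half_gt_zero)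
  define \<eta> where "\<eta> = \<epsilon> * d / 16"
  have eta: "\<eta> > 0" unfolding \<eta>_def using eps d by simp
  have "eventually (\<lambda>t. dist (e t) 0 < \<eta>) at_top" using lim eta by (simp add: tendsto_iff)
  then obtain T where T: "\<And>t. t \<ge> T \<Longrightarrow> norm (e t) < \<eta>" by (auto simp: eventually_at_top_linorder)
  obtain t where t: "t \<ge> max T 0" "norm (e' t) \<ge> \<epsilon>" using freq by blast
  have t0: "t \<ge> 0" using t by simp
  define v where "v = e' t"
  have nv: "norm v \<ge> \<epsilon>" using t v_def by simp
  have bound: "e' s \<bullet> v \<ge> (norm v)\<^sup>2 / 2" if "s \<in> {t..t + d/2}" for s
  proof -
    have "dist s t < d" using that d by (auto simp: dist_real_def)
    then have ds: "norm (e' s - v) < \<epsilon> / 2" using d that t0 unfolding v_def by (auto simp: dist_norm)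
    have "e' s \<bullet> v = v \<bullet> v + (e' s - v) \<bullet> v" by (simp add: algebra_simps)
    moreover have "\<bar>(e' s - v) \<bullet> v\<bar> \<le> norm (e' s - v) * norm v" by (rule Cauchy_Schwarz_ineq2)
    moreover have "norm (e' s - v) * norm v \<le> (\<epsilon> / 2) * norm v"
      using ds by (intro mult_right_mono) auto
    moreover have "(\<epsilon> / 2) * norm v \<le> (norm v)\<^sup>2 / 2" using nv eps by (simp add: power2_eq_square mult_right_mono)
    moreover have "v \<bullet> v = (norm v)\<^sup>2" by (simp add: power2_norm_eq_inner)
    ultimately show ?thesis by linarith
  qed
  have "(\<lambda>s. - (e s \<bullet> v) + ((norm v)\<^sup>2 / 2) * s) (t + d/2) \<le> (\<lambda>s. - (e s \<bullet> v) + ((norm v)\<^sup>2 / 2) * s) t"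
  proof (rule deriv_nonpos_mono[of t "t + d/2" _ "\<lambda>s. - (e' s \<bullet> v) + (norm v)\<^sup>2 / 2"])
    show "0 \<le> t" by (rule t0)
    show "t \<le> t + d/2" using d by simp
    fix s assume s: "s \<in> {t..t + d/2}"
    have "((\<lambda>s. e s \<bullet> v) has_real_derivative (e' s \<bullet> v + e s \<bullet> 0)) (at s within {0..})"
      by (rule has_vector_derivative_inner_real[OF der]) (use s t0 in auto)
    then show "((\<lambda>s. - (e s \<bullet> v) + ((norm v)\<^sup>2 / 2) * s) has_real_derivative - (e' s \<bullet> v) + (norm v)\<^sup>2 / 2) (at s within {0..})"
      by (auto intro!: derivative_eq_intros)
    show "- (e' s \<bullet> v) + (norm v)\<^sup>2 / 2 \<le> 0" using bound[OF s] by simp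
  qed
  then have k0: "- (e (t + d/2) \<bullet> v) + ((norm v)\<^sup>2 / 2) * (t + d/2) \<le> - (e t \<bullet> v) + ((norm v)\<^sup>2 / 2) * t" by simp
  have "((norm v)\<^sup>2 / 2) * (t + d/2) = ((norm v)\<^sup>2 / 2) * t + (norm v)\<^sup>2 / 2 * (d / 2)" by (simp add: distrib_left)
  then have key: "(norm v)\<^sup>2 / 2 * (d / 2) \<le> e (t + d/2) \<bullet> v - e t \<bullet> v" using k0 by linarith
  have "e (t + d/2) \<bullet> v - e t \<bullet> v \<le> norm (e (t + d/2)) * norm v + norm (e t) * norm v"
    using Cauchy_Schwarz_ineq2[of "e (t + d/2)" v] Cauchy_Schwarz_ineq2[of "e t" v] by linarith
  also have "\<dots> \<le> \<eta> * norm v + \<eta> * norm v"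
    using T[of t] T[of "t + d/2"] t d by (intro add_mono mult_right_mono) auto
  finally have "(norm v)\<^sup>2 / 2 * (d / 2) \<le> 2 * \<eta> * norm v" using key by simp
  then have "norm v * (norm v * d / 4) \<le> norm v * (2 * \<eta>)" by (simp add: power2_eq_square algebra_simps)
  moreover have "norm v > 0" using nv eps by linarith
  ultimately have "norm v * d / 4 \<le> 2 * \<eta>" by (rule mult_left_le_imp_le)
  then have "norm v \<le> \<epsilon> / 2" unfolding \<eta>_def using d by (simp add: field_simps)
  then show False using nv eps by simp
qed




lemma hvd_scale:
  "(f has_vector_derivative f') F \<Longrightarrow> ((\<lambda>s. c *\<^sub>R f s) has_vector_derivative c *\<^sub>R f') F"
  by (rule bounded_linear.has_vector_derivative[OF bounded_linear_scaleR_right])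

lemma lap_der:
  assumes "\<And>j. j < n \<Longrightarrow> ((\<lambda>s. w s j) has_vector_derivative w' j) F" and i: "i < n"
  shows "((\<lambda>s. lap n a (w s) i) has_vector_derivative lap n a w' i) F"
proof -
  have "((\<lambda>s. \<Sum>j<n. a i j *\<^sub>R (w s i - w s j)) has_vector_derivative (\<Sum>j<n. a i j *\<^sub>R (w' i - w' j))) F"
    by (intro has_vector_derivative_sum hvd_scale has_vector_derivative_diff assms i) simp
  then show ?thesis unfolding lap_def .
qed

lemma deriv_zero_const:
  fixes f :: "real \<Rightarrow> 'a::real_normed_vector"
  assumes "\<And>t. t \<ge> 0 \<Longrightarrow> (f has_vector_derivative 0) (at t within {0..})" and "t \<ge> 0"
  shows "f t = f 0"
proof -
  have "\<exists>c. \<forall>x\<in>{0::real..}. f x = c"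
    by (rule has_derivative_zero_constant) (use assms(1) in \<open>auto simp: has_vector_derivative_def\<close>)
  then show ?thesis using assms(2) by force
qed

lemma primitive_exists:
  fixes u :: "real \<Rightarrow> 'a::banach"
  assumes der: "\<And>t. t \<ge> 0 \<Longrightarrow> (u has_vector_derivative u' t) (at t within {0..})"
  shows "\<exists>P. P 0 = 0 \<and> (\<forall>t\<ge>0. (P has_vector_derivative u t) (at t within {0..}))"
proof -
  have cont: "continuous_on {0..} u"
    by (rule continuous_on_vector_derivative) (use der in auto)
  define P where "P t = integral {0..t} u" for t
  have "(P has_vector_derivative u t) (at t within {0..})" if t: "t \<ge> 0" for t
  proof -
    have "(P has_vector_derivative u t) (at t within {0..t+1})"
      unfolding P_def by (rule integral_has_vector_derivative) (use t in \<open>auto intro: continuous_on_subset[OF cont]\<close>)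
    moreover have "at t within {0..} = at t within {0..t+1}"
      by (rule at_within_nhd[of _ "{..<t+1}"]) (use t in auto)
    ultimately show ?thesis by simp
  qed
  moreover have "P 0 = 0" unfolding P_def by simp
  ultimately show ?thesis by blast
qed

locale idea =
  fixes n :: nat
    and f :: "nat \<Rightarrow> real^'d::finite \<Rightarrow> real"
    and g :: "nat \<Rightarrow> real^'d \<Rightarrow> real^'d"
    and A :: "nat \<Rightarrow> real^'d^'p::finite"
    and b :: "real^'p"
    and bb :: "nat \<Rightarrow> real^'p"
    and a :: "nat \<Rightarrow> nat \<Rightarrow> real"
    and \<alpha> \<beta> :: real
    and x :: "real \<Rightarrow> real^'d"
    and lam z :: "real \<Rightarrow> nat \<Rightarrow> real^'p"
  assumes n_pos: "n > 0"
    and f_convex: "\<forall>i<n. convex_on UNIV (f i)"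
    and f_grad: "\<forall>i<n. \<forall>u. (f i has_derivative (\<lambda>h. g i u \<bullet> h)) (at u)"
    and g_lip: "\<forall>i<n. loc_lipschitz_on UNIV (g i)"
    and opt_exists: "\<exists>u. (\<Sum>i<n. A i *v u) = b \<and>
                       (\<forall>v. (\<Sum>i<n. A i *v v) = b \<longrightarrow> (\<Sum>i<n. f i u) \<le> (\<Sum>i<n. f i v))"
    and bb_sum: "(\<Sum>i<n. bb i) = b"
    and undir: "undirected_graph n a"
    and conn: "graph_connected n a"
    and \<alpha>_pos: "\<alpha> > 0" and \<beta>_pos: "\<beta> > 0"
    and z0: "(\<Sum>i<n. z 0 i) = 0"
    and x_ode: "\<forall>t\<ge>0. (x has_vector_derivative
        (- \<alpha> *\<^sub>R ((\<Sum>i<n. g i (x t)) + (\<Sum>i<n. transpose (A i) *v lam t i))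
         - (\<Sum>i<n. transpose (A i) *v (A i *v x t - bb i - z t i)))) (at t within {0..})"
    and lam_ode: "\<forall>i<n. \<forall>t\<ge>0. ((\<lambda>s. lam s i) has_vector_derivative
        (A i *v x t - bb i - z t i - \<beta> *\<^sub>R lap n a (lam t) i)) (at t within {0..})"
    and z_ode: "\<forall>i<n. \<forall>t\<ge>0. ((\<lambda>s. z s i) has_vector_derivative
        ((\<alpha> * \<beta>) *\<^sub>R lap n a (lam t) i)) (at t within {0..})"
begin

definition F where "F u = (\<Sum>i<n. f i u)"
definition G where "G u = (\<Sum>i<n. g i u)"
definition AT :: "(nat \<Rightarrow> real^'p) \<Rightarrow> real^'d" where "AT v = (\<Sum>i<n. transpose (A i) *v v i)"
definition e where "e t i = A i *v x t - bb i - z t i"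
definition Xd where "Xd t = - \<alpha> *\<^sub>R (G (x t) + AT (lam t)) - AT (e t)"

lemma x_der: "t \<ge> 0 \<Longrightarrow> (x has_vector_derivative Xd t) (at t within {0..})"
  using x_ode unfolding Xd_def G_def AT_def e_def by simp

lemma lam_der: "i < n \<Longrightarrow> t \<ge> 0 \<Longrightarrow> ((\<lambda>s. lam s i) has_vector_derivative (e t i - \<beta> *\<^sub>R lap n a (lam t) i)) (at t within {0..})"
  using lam_ode unfolding e_def by simp

lemma z_der: "i < n \<Longrightarrow> t \<ge> 0 \<Longrightarrow> ((\<lambda>s. z s i) has_vector_derivative ((\<alpha> * \<beta>) *\<^sub>R lap n a (lam t) i)) (at t within {0..})"
  using z_ode by simp

lemma z_sum: assumes "t \<ge> 0" shows "(\<Sum>i<n. z t i) = 0"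
proof -
  have "((\<lambda>s. \<Sum>i<n. z s i) has_vector_derivative 0) (at t within {0..})" if "t \<ge> 0" for t
  proof -
    have "((\<lambda>s. \<Sum>i<n. z s i) has_vector_derivative (\<Sum>i<n. (\<alpha> * \<beta>) *\<^sub>R lap n a (lam t) i)) (at t within {0..})"
      by (intro has_vector_derivative_sum z_der that) simp
    moreover have "(\<Sum>i<n. (\<alpha> * \<beta>) *\<^sub>R lap n a (lam t) i) = 0"
      by (simp add: scaleR_sum_right[symmetric] lap_sum_zero[OF undir])
    ultimately show ?thesis by simp
  qed
  from deriv_zero_const[OF this assms] show ?thesis using z0 by simp
qed

lemma F_der: "(F has_derivative (\<lambda>h. G u \<bullet> h)) (at u)"
proof -
  have "((\<lambda>v. \<Sum>i<n. f i v) has_derivative (\<lambda>h. \<Sum>i<n. g i u \<bullet> h)) (at u)"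
    using f_grad by (intro has_derivative_sum) auto
  moreover have "(\<lambda>h. \<Sum>i<n. g i u \<bullet> h) = (\<lambda>h. G u \<bullet> h)"
    unfolding G_def by (simp add: inner_sum_left)
  ultimately show ?thesis unfolding F_def by simp
qed

lemma F_tangent: "F v \<ge> F u + G u \<bullet> (v - u)"
proof -
  have "f i v \<ge> f i u + g i u \<bullet> (v - u)" if "i < n" for i
    using f_convex f_grad that by (intro convex_grad_ineq[of "f i" "g i"]) auto
  then have "(\<Sum>i<n. f i u + g i u \<bullet> (v - u)) \<le> (\<Sum>i<n. f i v)" by (intro sum_mono) auto
  then show ?thesis unfolding F_def G_def by (simp add: sum.distrib inner_sum_left)
qed

lemma G_mono: "(u - v) \<bullet> (G u - G v) \<ge> 0"
  using F_tangent[of u v] F_tangent[of v u] by (simp add: inner_diff_left inner_diff_right inner_commute)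

lemma G_cont: "continuous_on UNIV G"
proof -
  have "continuous_on UNIV (g i)" if i: "i < n" for i
  proof -
    have "continuous (at u) (g i)" for u
    proof -
      obtain r L where r: "r > 0" and L: "L-lipschitz_on (ball u r \<inter> UNIV) (g i)"
        using g_lip i unfolding loc_lipschitz_on_def by blast
      have "continuous_on (ball u r) (g i)" using L by (auto intro: lipschitz_on_continuous_on)
      then show ?thesis using r by (simp add: continuous_on_eq_continuous_at)
    qed
    then show ?thesis by (simp add: continuous_at_imp_continuous_on)
  qed
  then show ?thesis unfolding G_def by (intro continuous_on_sum) auto
qed

lemma AT_linear: "linear (\<lambda>v::real^'p. AT (\<lambda>_. v))"
  unfolding AT_def by (intro linear_compose_sum ballI matrix_vector_mul_linear)

lemma AT_inner: "u \<bullet> AT v = (\<Sum>i<n. (A i *v u) \<bullet> v i)"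
  unfolding AT_def by (simp add: inner_sum_right inner_transpose_mv del: transpose_matrix_vector)

lemma kkt_exists:
  obtains xs mu where "(\<Sum>i<n. A i *v xs) = b" "\<And>v. (\<Sum>i<n. A i *v v) = b \<Longrightarrow> F xs \<le> F v"
    "G xs + AT (\<lambda>_. mu) = 0"
proof -
  obtain xs where feas: "(\<Sum>i<n. A i *v xs) = b" and opt: "\<And>v. (\<Sum>i<n. A i *v v) = b \<Longrightarrow> F xs \<le> F v"
    using opt_exists unfolding F_def by blast
  define T where "T = (\<lambda>v::real^'p. AT (\<lambda>_. v))"
  have linT: "linear T" unfolding T_def by (rule AT_linear)
  define S where "S = range T"
  have subS: "subspace S" unfolding S_def by (rule subspace_UNIV[THEN linear_subspace_image[OF linT]])
  then have spS: "span S = S" by simp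
  obtain y r where y: "y \<in> span S" and r: "\<And>w. w \<in> span S \<Longrightarrow> r \<bullet> w = 0" and dec: "G xs = y + r"
    using orthogonal_subspace_decomp_exists[of S "G xs"] unfolding Linear_Algebra.orthogonal_def by blast
  define q where "q = (\<Sum>i<n. A i *v r)"
  have "q \<bullet> q = r \<bullet> T q"
    unfolding T_def AT_inner q_def by (simp add: inner_sum_left)
  also have "\<dots> = 0" using r[of "T q"] spS unfolding S_def by auto
  finally have q0: "q = 0" by simp
  have "G xs \<bullet> r = 0"
  proof (rule fermat_dir[OF F_der])
    fix s :: real
    have "(\<Sum>i<n. A i *v (xs + s *\<^sub>R r)) = (\<Sum>i<n. A i *v xs) + s *\<^sub>R q"
      unfolding q_def by (simp add: matrix_vector_right_distrib matrix_vector_mult_scaleR sum.distrib scaleR_sum_right)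
    then show "F xs \<le> F (xs + s *\<^sub>R r)" using feas q0 by (intro opt) simp
  qed
  moreover have "y \<bullet> r = 0" using r[OF y] by (simp add: inner_commute)
  ultimately have "r \<bullet> r = 0" using dec by (simp add: inner_add_left)
  then have "r = 0" by simp
  then have "G xs \<in> S" using dec y spS by simp
  then obtain v where v: "G xs = T v" unfolding S_def by auto
  have "G xs + AT (\<lambda>_. - v) = 0"
    using v linear_neg[OF linT, of v] unfolding T_def by simp
  then show ?thesis using that feas opt by blast
qed

end




lemma lap_scale: "lap n a (\<lambda>j. c *\<^sub>R w j) i = c *\<^sub>R lap n a w i"
  unfolding lap_def by (simp add: scaleR_sum_right scaleR_diff_right mult.commute)

lemma lap_cong: "(\<And>j. j < n \<Longrightarrow> u j = w j) \<Longrightarrow> i < n \<Longrightarrow> lap n a u i = lap n a w i"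
  unfolding lap_def by (intro sum.cong) auto

context idea begin

definition zq where "zq xq i = A i *v xq - bb i"
definition Vf where "Vf xq mq W t = (1/2) * (norm (x t - xq))\<^sup>2
   + (1 / (2 * \<alpha>)) * (\<Sum>i<n. (norm (\<alpha> *\<^sub>R (lam t i - mq) + (z t i - zq xq i)))\<^sup>2)
   + (1 / (2 * \<beta>)) * Qf n a (W t)"

lemma Vf_nonneg: "Vf xq mq W t \<ge> 0"
  using Qf_nonneg[OF undir, of "W t"] \<alpha>_pos \<beta>_pos unfolding Vf_def
  by (intro add_nonneg_nonneg mult_nonneg_nonneg sum_nonneg) auto

lemma lyap:
  assumes eq1: "G xq + AT (\<lambda>_. mq) = 0" and eq2: "(\<Sum>i<n. A i *v xq) = b"
  obtains W where "\<And>t i. t \<ge> 0 \<Longrightarrow> i < n \<Longrightarrow> lap n a (W t) i = z t i - zq xq i"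
    and "\<And>t. t \<ge> 0 \<Longrightarrow> (Vf xq mq W has_real_derivative
           (- (\<alpha> * ((x t - xq) \<bullet> (G (x t) - G xq)) + (\<Sum>i<n. (norm (e t i))\<^sup>2)))) (at t within {0..})"
proof -
  have zqs: "(\<Sum>i<n. zq xq i) = 0" unfolding zq_def using eq2 bb_sum by (simp add: sum_subtractf)
  have "(\<Sum>i<n. z 0 i - zq xq i) = 0" using z0 zqs by (simp add: sum_subtractf)
  then obtain w0 where w0: "\<forall>i<n. lap n a w0 i = z 0 i - zq xq i"
    using lap_surj[OF undir conn n_pos] by blast
  have "\<forall>i\<in>{..<n}. \<exists>P. P 0 = 0 \<and> (\<forall>t\<ge>0. (P has_vector_derivative lam t i) (at t within {0..}))"
  proof
    fix i assume "i \<in> {..<n}"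
    then have i: "i < n" by simp
    show "\<exists>P. P 0 = 0 \<and> (\<forall>t\<ge>0. (P has_vector_derivative lam t i) (at t within {0..}))"
      by (rule primitive_exists[OF lam_der[OF i]])
  qed
  from bchoice[OF this] obtain P where P0: "\<forall>i\<in>{..<n}. P i 0 = 0 \<and> (\<forall>t\<ge>0. (P i has_vector_derivative lam t i) (at t within {0..}))"
    by blast
  have Pz: "\<And>i. i < n \<Longrightarrow> P i 0 = 0" using P0 by blast
  have Pd: "\<And>i t. i < n \<Longrightarrow> t \<ge> 0 \<Longrightarrow> (P i has_vector_derivative lam t i) (at t within {0..})" using P0 by blast
  define W where "W t i = w0 i + (\<alpha> * \<beta>) *\<^sub>R P i t" for t i
  have Wd: "((\<lambda>s. W s i) has_vector_derivative (\<alpha> * \<beta>) *\<^sub>R lam t i) (at t within {0..})"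
    if "i < n" "t \<ge> 0" for i t
    using has_vector_derivative_add[OF has_vector_derivative_const hvd_scale[OF Pd[OF that]], of "w0 i" "\<alpha> * \<beta>"]
    unfolding W_def by simp
  have Wlap: "lap n a (W t) i = z t i - zq xq i" if t: "t \<ge> 0" and i: "i < n" for t i
  proof -
    have "((\<lambda>s. lap n a (W s) i - z s i) has_vector_derivative 0) (at s within {0..})" if s: "s \<ge> 0" for s
    proof -
      have "((\<lambda>s. lap n a (W s) i - z s i) has_vector_derivative
          (lap n a (\<lambda>j. (\<alpha> * \<beta>) *\<^sub>R lam s j) i - (\<alpha> * \<beta>) *\<^sub>R lap n a (lam s) i)) (at s within {0..})"
        by (intro has_vector_derivative_diff lap_der Wd z_der i s)
      then show ?thesis by (simp add: lap_scale)
    qed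
    from deriv_zero_const[OF this t]
    have "lap n a (W t) i - z t i = lap n a (W 0) i - z 0 i" .
    also have "lap n a (W 0) i = lap n a w0 i" using Pz i by (intro lap_cong) (auto simp: W_def)
    finally have "lap n a (W t) i - z t i = - zq xq i" using w0 i by simp
    then have "lap n a (W t) i = - zq xq i + z t i" by (simp add: diff_eq_eq)
    then show ?thesis by simp
  qed
  show ?thesis
  proof (rule that[of W])
    show "lap n a (W t) i = z t i - zq xq i" if "t \<ge> 0" "i < n" for t i using Wlap that .
    fix t :: real assume t: "t \<ge> 0"
    define xt where "xt = x t - xq"
    define lt where "lt i = lam t i - mq" for i
    define zt where "zt i = z t i - zq xq i" for i
    define et where "et i = e t i" for i
    define U where "U i = \<alpha> *\<^sub>R (lam t i - mq) + (z t i - zq xq i)" for i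
    define U' where "U' i = \<alpha> *\<^sub>R (e t i - \<beta> *\<^sub>R lap n a (lam t) i) + (\<alpha> * \<beta>) *\<^sub>R lap n a (lam t) i" for i
    define W' where "W' i = (\<alpha> * \<beta>) *\<^sub>R lam t i" for i
    define D1 where "D1 = xt \<bullet> Xd t"
    define M where "M = xt \<bullet> (G (x t) - G xq)"
    define S1 where "S1 = (\<Sum>i<n. et i \<bullet> lt i)"
    define S2 where "S2 = (\<Sum>i<n. zt i \<bullet> lt i)"
    define S3 where "S3 = (\<Sum>i<n. et i \<bullet> et i)"
    define S4 where "S4 = (\<Sum>i<n. zt i \<bullet> et i)"
    define Dx where "Dx = 1/2 * (2 * D1) + 1 / (2 * \<alpha>) * (\<Sum>i<n. 2 * (U i \<bullet> U' i))
        + 1 / (2 * \<beta>) * (\<Sum>i<n. W' i \<bullet> lap n a (W t) i + W t i \<bullet> lap n a W' i)"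
    have h1: "((\<lambda>s. (norm (x s - xq))\<^sup>2) has_real_derivative 2 * D1) (at t within {0..})"
    proof -
      have "((\<lambda>s. x s - xq) has_vector_derivative Xd t - 0) (at t within {0..})"
        by (intro has_vector_derivative_diff x_der t has_vector_derivative_const)
      from has_vector_derivative_norm_sq[OF this] show ?thesis unfolding D1_def xt_def by simp
    qed
    have h2: "((\<lambda>s. \<Sum>i<n. (norm (\<alpha> *\<^sub>R (lam s i - mq) + (z s i - zq xq i)))\<^sup>2) has_real_derivative
        (\<Sum>i<n. 2 * (U i \<bullet> U' i))) (at t within {0..})"
    proof (rule DERIV_sum)
      fix i assume "i \<in> {..<n}"
      then have i: "i < n" by simp
      have "((\<lambda>s. \<alpha> *\<^sub>R (lam s i - mq) + (z s i - zq xq i)) has_vector_derivative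
          \<alpha> *\<^sub>R ((e t i - \<beta> *\<^sub>R lap n a (lam t) i) - 0) + ((\<alpha> * \<beta>) *\<^sub>R lap n a (lam t) i - 0)) (at t within {0..})"
        by (intro has_vector_derivative_add hvd_scale has_vector_derivative_diff lam_der z_der i t has_vector_derivative_const)
      from has_vector_derivative_norm_sq[OF this]
      show "((\<lambda>s. (norm (\<alpha> *\<^sub>R (lam s i - mq) + (z s i - zq xq i)))\<^sup>2) has_real_derivative 2 * (U i \<bullet> U' i)) (at t within {0..})"
        unfolding U_def U'_def by simp
    qed
    have h3: "((\<lambda>s. Qf n a (W s)) has_real_derivative
        (\<Sum>i<n. W' i \<bullet> lap n a (W t) i + W t i \<bullet> lap n a W' i)) (at t within {0..})"
      unfolding Qf_def
    proof (rule DERIV_sum)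
      fix i assume "i \<in> {..<n}"
      then have i: "i < n" by simp
      have d1: "((\<lambda>s. W s i) has_vector_derivative W' i) (at t within {0..})"
        unfolding W'_def by (rule Wd[OF i t])
      have d2: "((\<lambda>s. lap n a (W s) i) has_vector_derivative lap n a W' i) (at t within {0..})"
        unfolding W'_def by (intro lap_der Wd t i) simp
      show "((\<lambda>s. W s i \<bullet> lap n a (W s) i) has_real_derivative W' i \<bullet> lap n a (W t) i + W t i \<bullet> lap n a W' i) (at t within {0..})"
        by (rule has_vector_derivative_inner_real[OF d1 d2])
    qed
    have Veq: "Vf xq mq W = (\<lambda>s. 1/2 * (norm (x s - xq))\<^sup>2
        + 1 / (2 * \<alpha>) * (\<Sum>i<n. (norm (\<alpha> *\<^sub>R (lam s i - mq) + (z s i - zq xq i)))\<^sup>2)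
        + 1 / (2 * \<beta>) * Qf n a (W s))"
      by (rule ext) (simp add: Vf_def)
    have hV: "(Vf xq mq W has_real_derivative Dx) (at t within {0..})"
      unfolding Veq Dx_def by (intro DERIV_add DERIV_cmult h1 h2 h3)
    have Axt: "A i *v xt = et i + zt i" if "i < n" for i
      unfolding xt_def et_def zt_def e_def zq_def by (simp add: matrix_vector_mult_diff_distrib algebra_simps)
    have ATx: "xt \<bullet> AT v = (\<Sum>i<n. (et i + zt i) \<bullet> v i)" for v
      unfolding AT_inner using Axt by (intro sum.cong) auto
    have Gq: "G xq = - AT (\<lambda>_. mq)" using eq1 by (simp add: eq_neg_iff_add_eq_0)
    have c1: "D1 = - \<alpha> * (xt \<bullet> G (x t) + xt \<bullet> AT (lam t)) - xt \<bullet> AT (e t)"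
      unfolding D1_def Xd_def by (simp add: inner_diff_right inner_add_right)
    have c2: "xt \<bullet> G (x t) = M - xt \<bullet> AT (\<lambda>_. mq)"
      unfolding M_def using Gq by (simp add: inner_diff_right inner_add_right)
    have c3: "xt \<bullet> AT (lam t) - xt \<bullet> AT (\<lambda>_. mq) = S1 + S2"
      unfolding ATx S1_def S2_def lt_def
      by (simp add: sum_subtractf[symmetric] sum.distrib[symmetric] inner_diff_right inner_add_left algebra_simps)
    have c4: "xt \<bullet> AT (e t) = S3 + S4"
      unfolding ATx S3_def S4_def et_def by (simp add: sum.distrib[symmetric] inner_add_left)
    have cD1: "D1 = - \<alpha> * (M + S1 + S2) - (S3 + S4)"
      using c1 c2 c3 c4 by (simp add: algebra_simps)
    have U'e: "U' i = \<alpha> *\<^sub>R et i" for i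
      unfolding U'_def et_def by (simp add: algebra_simps)
    have cU: "(\<Sum>i<n. 2 * (U i \<bullet> U' i)) = 2 * \<alpha> * (\<alpha> * S1 + S4)"
    proof -
      have "U i \<bullet> U' i = \<alpha> * (\<alpha> * (et i \<bullet> lt i) + zt i \<bullet> et i)" for i
        unfolding U'e U_def lt_def zt_def by (simp add: inner_add_left inner_commute algebra_simps)
      then show ?thesis unfolding S1_def S4_def
        by (simp add: sum_distrib_left sum.distrib algebra_simps)
    qed
    have zts: "(\<Sum>i<n. zt i) = 0" unfolding zt_def using z_sum[OF t] zqs by (simp add: sum_subtractf)
    have cW: "(\<Sum>i<n. W' i \<bullet> lap n a (W t) i + W t i \<bullet> lap n a W' i) = 2 * \<alpha> * \<beta> * S2"
    proof -
      have "(\<Sum>i<n. W t i \<bullet> lap n a W' i) = (\<Sum>i<n. W' i \<bullet> lap n a (W t) i)"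
        by (rule lap_symm[OF undir])
      then have "(\<Sum>i<n. W' i \<bullet> lap n a (W t) i + W t i \<bullet> lap n a W' i) = 2 * (\<Sum>i<n. W' i \<bullet> zt i)"
        using Wlap[OF t] unfolding zt_def by (simp add: sum.distrib)
      also have "(\<Sum>i<n. W' i \<bullet> zt i) = \<alpha> * \<beta> * (\<Sum>i<n. lt i \<bullet> zt i) + \<alpha> * \<beta> * (mq \<bullet> (\<Sum>i<n. zt i))"
        unfolding W'_def lt_def by (simp add: inner_diff_left inner_sum_right sum_distrib_left sum_subtractf algebra_simps)
      also have "(\<Sum>i<n. lt i \<bullet> zt i) = S2" unfolding S2_def by (simp add: inner_commute)
      finally show ?thesis using zts by simp
    qed
    have cS3: "(\<Sum>i<n. (norm (e t i))\<^sup>2) = S3" unfolding S3_def et_def by (simp add: power2_norm_eq_inner)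
    have q1: "1 / (2 * \<alpha>) * (2 * \<alpha> * (\<alpha> * S1 + S4)) = \<alpha> * S1 + S4" using \<alpha>_pos by simp
    have q2: "1 / (2 * \<beta>) * (2 * \<alpha> * \<beta> * S2) = \<alpha> * S2" using \<beta>_pos by simp
    have "Dx = D1 + (\<alpha> * S1 + S4) + \<alpha> * S2" unfolding Dx_def cU cW q1 q2 by simp
    then have "Dx = - (\<alpha> * M + S3)" using cD1 by (simp add: algebra_simps)
    then show "(Vf xq mq W has_real_derivative (- (\<alpha> * ((x t - xq) \<bullet> (G (x t) - G xq)) + (\<Sum>i<n. (norm (e t i))\<^sup>2)))) (at t within {0..})"
      using hV cS3 unfolding M_def xt_def by simp
  qed
qed

end




lemma sq_le_bound:
  assumes y: "(y::real) \<ge> 0" and yc: "y\<^sup>2 \<le> c"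
  shows "y \<le> 1 + c"
proof (cases "y \<le> 1")
  case True
  have "c \<ge> 0" using yc zero_le_power2[of y] by linarith
  then show ?thesis using True by linarith
next
  case False
  then have "y * 1 \<le> y * y" using y by (intro mult_left_mono) auto
  then have "y \<le> y\<^sup>2" by (simp add: power2_eq_square)
  then show ?thesis using yc by linarith
qed

lemma lap_norm_bound:
  assumes und: "undirected_graph n a" and i: "i < n" and D: "\<And>j. j < n \<Longrightarrow> norm (w i - w j) \<le> D"
  shows "norm (lap n a w i) \<le> (\<Sum>j<n. a i j) * D"
proof -
  have "norm (lap n a w i) \<le> (\<Sum>j<n. norm (a i j *\<^sub>R (w i - w j)))"
    unfolding lap_def by (rule norm_sum)
  also have "\<dots> \<le> (\<Sum>j<n. a i j * D)"
  proof (rule sum_mono)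
    fix j assume "j \<in> {..<n}"
    then have j: "j < n" by simp
    have a0: "a i j \<ge> 0" using und i j unfolding undirected_graph_def by auto
    show "norm (a i j *\<^sub>R (w i - w j)) \<le> a i j * D"
      using a0 D[OF j] by (simp add: mult_left_mono)
  qed
  finally show ?thesis by (simp add: sum_distrib_right)
qed

context idea begin

lemma V_mono:
  assumes der: "\<And>t. t \<ge> 0 \<Longrightarrow> (Vf xq mq W has_real_derivative
           (- (\<alpha> * ((x t - xq) \<bullet> (G (x t) - G xq)) + (\<Sum>i<n. (norm (e t i))\<^sup>2)))) (at t within {0..})"
    and st: "0 \<le> s" "s \<le> t"
  shows "Vf xq mq W t \<le> Vf xq mq W s"
proof (rule deriv_nonpos_mono[OF st])
  fix r assume r: "r \<in> {s..t}"
  show "(Vf xq mq W has_real_derivative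
           (- (\<alpha> * ((x r - xq) \<bullet> (G (x r) - G xq)) + (\<Sum>i<n. (norm (e r i))\<^sup>2)))) (at r within {0..})"
    using der st r by auto
next
  fix r assume r: "r \<in> {s..t}"
  have "(x r - xq) \<bullet> (G (x r) - G xq) \<ge> 0" by (rule G_mono)
  then have "\<alpha> * ((x r - xq) \<bullet> (G (x r) - G xq)) \<ge> 0" using \<alpha>_pos by simp
  moreover have "(\<Sum>i<n. (norm (e r i))\<^sup>2) \<ge> 0" by (intro sum_nonneg) auto
  ultimately show "- (\<alpha> * ((x r - xq) \<bullet> (G (x r) - G xq)) + (\<Sum>i<n. (norm (e r i))\<^sup>2)) \<le> 0" by simp
qed

lemma V_parts:
  shows "(norm (x t - xq))\<^sup>2 \<le> 2 * Vf xq mq W t"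
    and "i < n \<Longrightarrow> (norm (\<alpha> *\<^sub>R (lam t i - mq) + (z t i - zq xq i)))\<^sup>2 \<le> 2 * \<alpha> * Vf xq mq W t"
    and "Qf n a (W t) \<le> 2 * \<beta> * Vf xq mq W t"
proof -
  define P1 where "P1 = (norm (x t - xq))\<^sup>2"
  define P2 where "P2 = (\<Sum>i<n. (norm (\<alpha> *\<^sub>R (lam t i - mq) + (z t i - zq xq i)))\<^sup>2)"
  define P3 where "P3 = Qf n a (W t)"
  have V: "Vf xq mq W t = P1 / 2 + P2 / (2 * \<alpha>) + P3 / (2 * \<beta>)"
    unfolding Vf_def P1_def P2_def P3_def by simp
  have n1: "P1 \<ge> 0" unfolding P1_def by simp
  have n2: "P2 \<ge> 0" unfolding P2_def by (intro sum_nonneg) auto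
  have n3: "P3 \<ge> 0" unfolding P3_def by (rule Qf_nonneg[OF undir])
  have a2: "P2 / (2 * \<alpha>) \<ge> 0" using n2 \<alpha>_pos by simp
  have b3: "P3 / (2 * \<beta>) \<ge> 0" using n3 \<beta>_pos by simp
  show "(norm (x t - xq))\<^sup>2 \<le> 2 * Vf xq mq W t" using V a2 b3 unfolding P1_def by simp
  show "Qf n a (W t) \<le> 2 * \<beta> * Vf xq mq W t"
  proof -
    have "P3 / (2 * \<beta>) \<le> Vf xq mq W t" using V n1 a2 by simp
    then show ?thesis unfolding P3_def using \<beta>_pos by (simp add: field_simps)
  qed
  assume i: "i < n"
  have "(norm (\<alpha> *\<^sub>R (lam t i - mq) + (z t i - zq xq i)))\<^sup>2 \<le> P2"
    unfolding P2_def using i by (intro member_le_sum) auto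
  moreover have "P2 / (2 * \<alpha>) \<le> Vf xq mq W t" using V n1 b3 by simp
  then have "P2 \<le> 2 * \<alpha> * Vf xq mq W t" using \<alpha>_pos by (simp add: field_simps)
  ultimately show "(norm (\<alpha> *\<^sub>R (lam t i - mq) + (z t i - zq xq i)))\<^sup>2 \<le> 2 * \<alpha> * Vf xq mq W t" by simp
qed

lemma path_C: obtains C where "C \<ge> 0" "\<And>w::nat \<Rightarrow> real^'p. \<And>i j. i < n \<Longrightarrow> j < n \<Longrightarrow> norm (w i - w j) \<le> C * sqrt (Qf n a w)"
  using path_bound[OF undir conn, where 'v="real^'p"] by blast

lemma zlap_bound:
  assumes Wl: "\<And>t i. t \<ge> 0 \<Longrightarrow> i < n \<Longrightarrow> lap n a (W t) i = z t i - zq xq i"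
    and t: "t \<ge> 0" and i: "i < n" and C: "C \<ge> 0"
    and Cp: "\<And>w::nat \<Rightarrow> real^'p. \<And>i j. i < n \<Longrightarrow> j < n \<Longrightarrow> norm (w i - w j) \<le> C * sqrt (Qf n a w)"
  shows "norm (z t i - zq xq i) \<le> (\<Sum>j<n. a i j) * (C * sqrt (Qf n a (W t)))"
proof -
  have "norm (lap n a (W t) i) \<le> (\<Sum>j<n. a i j) * (C * sqrt (Qf n a (W t)))"
    by (rule lap_norm_bound[OF undir i]) (rule Cp[OF i])
  then show ?thesis using Wl[OF t i] by simp
qed

lemma bounds:
  assumes kkt: "G xs + AT (\<lambda>_. mu) = 0" "(\<Sum>i<n. A i *v xs) = b"
  shows "bounded (x ` {0..})" "\<And>i. i < n \<Longrightarrow> bounded ((\<lambda>t. lam t i) ` {0..})"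
    "\<And>i. i < n \<Longrightarrow> bounded ((\<lambda>t. z t i) ` {0..})"
proof -
  obtain W where Wl: "\<And>t i. t \<ge> 0 \<Longrightarrow> i < n \<Longrightarrow> lap n a (W t) i = z t i - zq xs i"
    and Wd: "\<And>t. t \<ge> 0 \<Longrightarrow> (Vf xs mu W has_real_derivative
           (- (\<alpha> * ((x t - xs) \<bullet> (G (x t) - G xs)) + (\<Sum>i<n. (norm (e t i))\<^sup>2)))) (at t within {0..})"
    using lyap[OF kkt] by blast
  define K where "K = Vf xs mu W 0"
  have VK: "Vf xs mu W t \<le> K" if "t \<ge> 0" for t
    unfolding K_def using V_mono[OF Wd _ that] by simp
  have K0: "K \<ge> 0" unfolding K_def by (rule Vf_nonneg)
  obtain C where C: "C \<ge> 0" and Cp: "\<And>w::nat \<Rightarrow> real^'p. \<And>i j. i < n \<Longrightarrow> j < n \<Longrightarrow> norm (w i - w j) \<le> C * sqrt (Qf n a w)"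
    using path_bound[OF undir conn, where 'v="real^'p"] by blast
  have xb: "norm (x t - xs) \<le> 1 + 2 * K" if "t \<ge> 0" for t
    using V_parts(1)[of t xs mu W] VK[OF that] by (intro sq_le_bound) auto
  show "bounded (x ` {0..})" unfolding bounded_iff
  proof (intro exI[of _ "norm xs + (1 + 2 * K)"] ballI)
    fix y assume "y \<in> x ` {0..}"
    then obtain t where t: "t \<ge> 0" "y = x t" by auto
    have "norm (x t) \<le> norm xs + norm (x t - xs)" by (metis add_diff_cancel_left' norm_triangle_sub)
    then show "norm y \<le> norm xs + (1 + 2 * K)" using xb[OF t(1)] t by simp
  qed
  define D where "D = C * sqrt (2 * \<beta> * K)"
  have zb: "norm (z t i - zq xs i) \<le> (\<Sum>j<n. a i j) * D" if "t \<ge> 0" "i < n" for t i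
  proof -
    have "norm (z t i - zq xs i) \<le> (\<Sum>j<n. a i j) * (C * sqrt (Qf n a (W t)))"
      by (rule zlap_bound[OF Wl that C Cp])
    also have "\<dots> \<le> (\<Sum>j<n. a i j) * D"
    proof (rule mult_left_mono)
      have "Qf n a (W t) \<le> 2 * \<beta> * K" using V_parts(3)[of W t xs mu] VK[OF that(1)] \<beta>_pos
        by (meson mult_left_mono order_trans less_imp_le mult_pos_pos zero_less_numeral)
      then show "C * sqrt (Qf n a (W t)) \<le> D" unfolding D_def using C by (intro mult_left_mono) auto
      show "0 \<le> (\<Sum>j<n. a i j)" using undir that(2) unfolding undirected_graph_def by (intro sum_nonneg) auto
    qed
    finally show ?thesis .
  qed
  show "bounded ((\<lambda>t. z t i) ` {0..})" if i: "i < n" for i unfolding bounded_iff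
  proof (intro exI[of _ "norm (zq xs i) + (\<Sum>j<n. a i j) * D"] ballI)
    fix y assume "y \<in> (\<lambda>t. z t i) ` {0..}"
    then obtain t where t: "t \<ge> 0" "y = z t i" by auto
    have "norm (z t i) \<le> norm (zq xs i) + norm (z t i - zq xs i)" by (metis add_diff_cancel_left' norm_triangle_sub)
    then show "norm y \<le> norm (zq xs i) + (\<Sum>j<n. a i j) * D" using zb[OF t(1) i] t by simp
  qed
  show "bounded ((\<lambda>t. lam t i) ` {0..})" if i: "i < n" for i unfolding bounded_iff
  proof (intro exI[of _ "norm mu + ((1 + 2 * \<alpha> * K) + (\<Sum>j<n. a i j) * D) / \<alpha>"] ballI)
    fix y assume "y \<in> (\<lambda>t. lam t i) ` {0..}"
    then obtain t where t: "t \<ge> 0" "y = lam t i" by auto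
    define U where "U = \<alpha> *\<^sub>R (lam t i - mu) + (z t i - zq xs i)"
    have "(norm U)\<^sup>2 \<le> 2 * \<alpha> * K"
      using V_parts(2)[OF i, of t mu xs W] VK[OF t(1)] \<alpha>_pos unfolding U_def
      by (meson mult_left_mono order_trans less_imp_le mult_pos_pos zero_less_numeral)
    then have nU: "norm U \<le> 1 + 2 * \<alpha> * K" by (intro sq_le_bound) auto
    have "\<alpha> *\<^sub>R (lam t i - mu) = U - (z t i - zq xs i)" unfolding U_def by simp
    then have "\<alpha> * norm (lam t i - mu) \<le> norm U + norm (z t i - zq xs i)"
      using \<alpha>_pos by (metis abs_of_pos norm_scaleR norm_triangle_ineq4)
    also have "\<dots> \<le> (1 + 2 * \<alpha> * K) + (\<Sum>j<n. a i j) * D" using nU zb[OF t(1) i] by simp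
    finally have "norm (lam t i - mu) \<le> ((1 + 2 * \<alpha> * K) + (\<Sum>j<n. a i j) * D) / \<alpha>"
      using \<alpha>_pos by (simp add: field_simps)
    moreover have "norm (lam t i) \<le> norm mu + norm (lam t i - mu)" by (metis add_diff_cancel_left' norm_triangle_sub)
    ultimately show "norm y \<le> norm mu + ((1 + 2 * \<alpha> * K) + (\<Sum>j<n. a i j) * D) / \<alpha>" using t by simp
  qed
qed

end




lemma bounded_const_comp: "bounded ((\<lambda>t. c::'a::real_normed_vector) ` S)"
  unfolding bounded_iff by (intro exI[of _ "norm c"]) auto

lemma bounded_compose_cont:
  fixes u :: "real \<Rightarrow> 'a::euclidean_space" and G :: "'a \<Rightarrow> 'b::real_normed_vector"
  assumes bu: "bounded (u ` S)" and cG: "continuous_on UNIV G"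
  shows "bounded ((\<lambda>t. G (u t)) ` S)"
proof -
  obtain B where B: "\<And>t. t \<in> S \<Longrightarrow> norm (u t) \<le> B" using bu by (auto simp: bounded_iff)
  have sub: "u ` S \<subseteq> cball 0 B" using B by auto
  have "compact (G ` cball 0 B)" by (rule compact_continuous_image) (auto intro: continuous_on_subset[OF cG])
  then have "bounded (G ` cball 0 B)" by (rule compact_imp_bounded)
  moreover have "(\<lambda>t. G (u t)) ` S \<subseteq> G ` cball 0 B" using sub by auto
  ultimately show ?thesis by (rule bounded_subset)
qed

lemma bounded_norm_bound:
  assumes "bounded (f ` S)" obtains B where "\<And>t. t \<in> S \<Longrightarrow> norm (f t) \<le> B"
  using assms by (auto simp: bounded_iff)

lemma uc_mv:
  fixes M :: "real^'n::finite^'m::finite" and u :: "real \<Rightarrow> real^'n" and S :: "real set"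
  shows "uniformly_continuous_on S u \<Longrightarrow> uniformly_continuous_on S (\<lambda>t. M *v u t)"
  by (rule bounded_linear.uniformly_continuous_on[OF matrix_vector_mul_bounded_linear])

context idea begin

lemma bounded_AT:
  fixes v :: "real \<Rightarrow> nat \<Rightarrow> real^'p" and S :: "real set"
  assumes "\<And>i. i < n \<Longrightarrow> bounded ((\<lambda>t. v t i) ` S)"
  shows "bounded ((\<lambda>t. AT (v t)) ` S)"
  unfolding AT_def by (intro bounded_sum_comp bounded_mv_comp assms) simp

lemma uc_AT:
  fixes v :: "real \<Rightarrow> nat \<Rightarrow> real^'p" and S :: "real set"
  assumes "\<And>i. i < n \<Longrightarrow> uniformly_continuous_on S (\<lambda>t. v t i)"
  shows "uniformly_continuous_on S (\<lambda>t. AT (v t))"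
  unfolding AT_def by (intro uniformly_continuous_on_sum uc_mv assms) simp

lemma bounded_lap:
  fixes v :: "real \<Rightarrow> nat \<Rightarrow> real^'p" and S :: "real set"
  assumes "\<And>j. j < n \<Longrightarrow> bounded ((\<lambda>t. v t j) ` S)" and i: "i < n"
  shows "bounded ((\<lambda>t. lap n a (v t) i) ` S)"
  unfolding lap_def by (intro bounded_sum_comp bounded_scale_comp bounded_minus_comp assms i) simp

lemma uc_lap:
  fixes v :: "real \<Rightarrow> nat \<Rightarrow> real^'p" and S :: "real set"
  assumes "\<And>j. j < n \<Longrightarrow> uniformly_continuous_on S (\<lambda>t. v t j)" and i: "i < n"
  shows "uniformly_continuous_on S (\<lambda>t. lap n a (v t) i)"
  unfolding lap_def by (intro uniformly_continuous_on_sum uniformly_continuous_on_cmul uniformly_continuous_on_diff assms i) simp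

lemma e_der: "i < n \<Longrightarrow> t \<ge> 0 \<Longrightarrow>
   ((\<lambda>s. e s i) has_vector_derivative (A i *v Xd t - (\<alpha> * \<beta>) *\<^sub>R lap n a (lam t) i)) (at t within {0..})"
proof -
  assume i: "i < n" and t: "t \<ge> 0"
  have "((\<lambda>s. A i *v x s - bb i - z s i) has_vector_derivative (A i *v Xd t - 0 - (\<alpha> * \<beta>) *\<^sub>R lap n a (lam t) i)) (at t within {0..})"
    by (intro has_vector_derivative_diff bounded_linear.has_vector_derivative[OF matrix_vector_mul_bounded_linear]
        x_der z_der i t has_vector_derivative_const)
  then show ?thesis unfolding e_def by simp
qed

lemma limits:
  assumes kkt: "G xs + AT (\<lambda>_. mu) = 0" "(\<Sum>i<n. A i *v xs) = b"
  shows "((\<lambda>t. (x t - xs) \<bullet> (G (x t) - G xs)) \<longlongrightarrow> 0) at_top"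
    "\<And>i. i < n \<Longrightarrow> ((\<lambda>t. e t i) \<longlongrightarrow> 0) at_top"
    "\<And>i. i < n \<Longrightarrow> ((\<lambda>t. A i *v Xd t - (\<alpha> * \<beta>) *\<^sub>R lap n a (lam t) i) \<longlongrightarrow> 0) at_top"
proof -
  let ?S = "{0::real..}"
  note bx = bounds(1)[OF kkt] and bl = bounds(2)[OF kkt] and bz = bounds(3)[OF kkt]
  have bG: "bounded ((\<lambda>t. G (x t)) ` ?S)" by (rule bounded_compose_cont[OF bx G_cont])
  have be: "bounded ((\<lambda>t. e t i) ` ?S)" if i: "i < n" for i
    unfolding e_def by (intro bounded_minus_comp bounded_mv_comp bx bounded_const_comp bz i)
  have bXd: "bounded (Xd ` ?S)"
  proof -
    have "bounded ((\<lambda>t. - \<alpha> *\<^sub>R (G (x t) + AT (lam t)) - AT (e t)) ` ?S)"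
      by (intro bounded_minus_comp bounded_scale_comp bounded_plus_comp bG bounded_AT bl be)
    then show ?thesis unfolding Xd_def[abs_def] .
  qed
  have blap: "bounded ((\<lambda>t. lap n a (lam t) i) ` ?S)" if "i < n" for i
    by (intro bounded_lap bl that)
  obtain Bx where Bx: "\<And>t. t \<in> ?S \<Longrightarrow> norm (Xd t) \<le> Bx" using bounded_norm_bound[OF bXd] by blast
  have ucx: "uniformly_continuous_on ?S x" by (rule uc_of_deriv[OF x_der, of Bx]) (use Bx in auto)
  have ucl: "uniformly_continuous_on ?S (\<lambda>t. lam t i)" if i: "i < n" for i
  proof -
    have "bounded ((\<lambda>t. e t i - \<beta> *\<^sub>R lap n a (lam t) i) ` ?S)"
      by (intro bounded_minus_comp bounded_scale_comp be blap i)
    from bounded_norm_bound[OF this] obtain B where B: "\<And>t. t \<in> ?S \<Longrightarrow> norm (e t i - \<beta> *\<^sub>R lap n a (lam t) i) \<le> B" by blast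
    show ?thesis by (rule uc_of_deriv[OF lam_der[OF i], of B]) (use B in auto)
  qed
  have ucz: "uniformly_continuous_on ?S (\<lambda>t. z t i)" if i: "i < n" for i
  proof -
    have "bounded ((\<lambda>t. (\<alpha> * \<beta>) *\<^sub>R lap n a (lam t) i) ` ?S)"
      by (intro bounded_scale_comp blap i)
    from bounded_norm_bound[OF this] obtain B where B: "\<And>t. t \<in> ?S \<Longrightarrow> norm ((\<alpha> * \<beta>) *\<^sub>R lap n a (lam t) i) \<le> B" by blast
    show ?thesis by (rule uc_of_deriv[OF z_der[OF i], of B]) (use B in auto)
  qed
  have ucG: "uniformly_continuous_on ?S (\<lambda>t. G (x t))" by (rule uc_compose_cont(1)[OF ucx bx G_cont])
  have uce: "uniformly_continuous_on ?S (\<lambda>t. e t i)" if i: "i < n" for i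
    unfolding e_def by (intro uniformly_continuous_on_diff uc_mv ucx uniformly_continuous_on_const ucz i)
  have ucXd: "uniformly_continuous_on ?S Xd"
  proof -
    have "uniformly_continuous_on ?S (\<lambda>t. - \<alpha> *\<^sub>R (G (x t) + AT (lam t)) - AT (e t))"
      by (intro uniformly_continuous_on_diff uniformly_continuous_on_cmul uniformly_continuous_on_add ucG uc_AT ucl uce)
    then show ?thesis unfolding Xd_def[abs_def] .
  qed
  define M where "M t = (x t - xs) \<bullet> (G (x t) - G xs)" for t
  define h where "h t = \<alpha> * M t + (\<Sum>i<n. (norm (e t i))\<^sup>2)" for t
  have ucM: "uniformly_continuous_on ?S M"
    unfolding M_def
    by (intro uc_inner uniformly_continuous_on_diff ucx ucG uniformly_continuous_on_const
        bounded_minus_comp bx bG bounded_const_comp)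
  have ucn: "uniformly_continuous_on ?S (\<lambda>t. (norm (e t i))\<^sup>2)" if i: "i < n" for i
  proof -
    have "uniformly_continuous_on ?S (\<lambda>t. e t i \<bullet> e t i)" by (intro uc_inner uce be i)
    then show ?thesis by (simp add: power2_norm_eq_inner)
  qed
  have uch: "uniformly_continuous_on ?S h"
    unfolding h_def by (intro uniformly_continuous_on_add uniformly_continuous_on_cmul_left ucM uniformly_continuous_on_sum ucn) auto
  have Mnn: "M t \<ge> 0" for t unfolding M_def by (rule G_mono)
  have hnn: "h t \<ge> 0" for t unfolding h_def using Mnn[of t] \<alpha>_pos by (intro add_nonneg_nonneg sum_nonneg) auto
  obtain W where Wl: "\<And>t i. t \<ge> 0 \<Longrightarrow> i < n \<Longrightarrow> lap n a (W t) i = z t i - zq xs i"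
    and Wd: "\<And>t. t \<ge> 0 \<Longrightarrow> (Vf xs mu W has_real_derivative
           (- (\<alpha> * ((x t - xs) \<bullet> (G (x t) - G xs)) + (\<Sum>i<n. (norm (e t i))\<^sup>2)))) (at t within {0..})"
    using lyap[OF kkt] by blast
  have hlim: "(h \<longlongrightarrow> 0) at_top"
  proof (rule barbalat1[OF _ hnn uch Vf_nonneg])
    fix t :: real assume "t \<ge> 0"
    then show "(Vf xs mu W has_real_derivative - h t) (at t within {0..})"
      using Wd unfolding h_def M_def by simp
  qed
  have "((\<lambda>t. \<alpha> * M t) \<longlongrightarrow> 0) at_top"
  proof (rule tendsto_sandwich[OF _ _ tendsto_const hlim])
    show "eventually (\<lambda>t. 0 \<le> \<alpha> * M t) at_top" using Mnn \<alpha>_pos by simp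
    show "eventually (\<lambda>t. \<alpha> * M t \<le> h t) at_top" unfolding h_def by (simp add: sum_nonneg)
  qed
  then have "((\<lambda>t. (1 / \<alpha>) * (\<alpha> * M t)) \<longlongrightarrow> (1 / \<alpha>) * 0) at_top" by (intro tendsto_intros)
  then show "((\<lambda>t. (x t - xs) \<bullet> (G (x t) - G xs)) \<longlongrightarrow> 0) at_top"
    using \<alpha>_pos unfolding M_def by simp
  have elim: "((\<lambda>t. e t i) \<longlongrightarrow> 0) at_top" if i: "i < n" for i
  proof -
    have "((\<lambda>t. (norm (e t i))\<^sup>2) \<longlongrightarrow> 0) at_top"
    proof (rule tendsto_sandwich[OF _ _ tendsto_const hlim])
      show "eventually (\<lambda>t. 0 \<le> (norm (e t i))\<^sup>2) at_top" by simp
      have "(norm (e t i))\<^sup>2 \<le> h t" for t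
      proof -
        have "(norm (e t i))\<^sup>2 \<le> (\<Sum>i<n. (norm (e t i))\<^sup>2)" using i by (intro member_le_sum) auto
        moreover have "\<alpha> * M t \<ge> 0" using Mnn \<alpha>_pos by simp
        ultimately show ?thesis unfolding h_def by linarith
      qed
      then show "eventually (\<lambda>t. (norm (e t i))\<^sup>2 \<le> h t) at_top" by simp
    qed
    then have "((\<lambda>t. sqrt ((norm (e t i))\<^sup>2)) \<longlongrightarrow> sqrt 0) at_top" by (intro tendsto_intros)
    then have "((\<lambda>t. norm (e t i)) \<longlongrightarrow> 0) at_top" by simp
    then show ?thesis by (simp add: tendsto_norm_zero_iff)
  qed
  then show "\<And>i. i < n \<Longrightarrow> ((\<lambda>t. e t i) \<longlongrightarrow> 0) at_top" .
  show "((\<lambda>t. A i *v Xd t - (\<alpha> * \<beta>) *\<^sub>R lap n a (lam t) i) \<longlongrightarrow> 0) at_top" if i: "i < n" for i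
  proof (rule barbalat2[OF elim[OF i]])
    show "\<And>t. t \<ge> 0 \<Longrightarrow> ((\<lambda>s. e s i) has_vector_derivative (A i *v Xd t - (\<alpha> * \<beta>) *\<^sub>R lap n a (lam t) i)) (at t within {0..})"
      by (rule e_der[OF i])
    show "uniformly_continuous_on {0..} (\<lambda>t. A i *v Xd t - (\<alpha> * \<beta>) *\<^sub>R lap n a (lam t) i)"
      by (intro uniformly_continuous_on_diff uc_mv ucXd uniformly_continuous_on_cmul uc_lap ucl i)
  qed
qed

end




lemma multi_subseq:
  fixes X :: "nat \<Rightarrow> 'a::heine_borel" and Y :: "nat \<Rightarrow> nat \<Rightarrow> 'b::heine_borel"
  assumes bX: "bounded (range X)" and bY: "\<And>i. i < m \<Longrightarrow> bounded (range (\<lambda>k. Y k i))"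
  shows "\<exists>r l ly. strict_mono r \<and> (X \<circ> r) \<longlonglongrightarrow> l \<and> (\<forall>i<m. (\<lambda>k. Y (r k) i) \<longlonglongrightarrow> ly i)"
  using bY
proof (induction m)
  case 0
  obtain l r where "strict_mono r" "(X \<circ> r) \<longlonglongrightarrow> l" using bounded_imp_convergent_subsequence[OF bX] by blast
  then show ?case by blast
next
  case (Suc m)
  have "\<exists>r l ly. strict_mono r \<and> (X \<circ> r) \<longlonglongrightarrow> l \<and> (\<forall>i<m. (\<lambda>k. Y (r k) i) \<longlonglongrightarrow> ly i)"
    by (rule Suc.IH) (use Suc.prems in simp)
  then obtain r l ly where r: "strict_mono r" "(X \<circ> r) \<longlonglongrightarrow> l" "\<forall>i<m. (\<lambda>k. Y (r k) i) \<longlonglongrightarrow> ly i" by blast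
  have "bounded (range (\<lambda>k. Y k m))" using Suc.prems by simp
  moreover have "range (\<lambda>k. Y (r k) m) \<subseteq> range (\<lambda>k. Y k m)" by auto
  ultimately have "bounded (range (\<lambda>k. Y (r k) m))" by (rule bounded_subset)
  from bounded_imp_convergent_subsequence[OF this] obtain l2 r2 where r2: "strict_mono r2" "((\<lambda>k. Y (r k) m) \<circ> r2) \<longlonglongrightarrow> l2" by blast
  have sm: "strict_mono (r \<circ> r2)" using r(1) r2(1) by (rule strict_mono_o)
  have "(X \<circ> (r \<circ> r2)) \<longlonglongrightarrow> l" using LIMSEQ_subseq_LIMSEQ[OF r(2) r2(1)] by (simp add: o_assoc)
  moreover have "\<forall>i<Suc m. (\<lambda>k. Y ((r \<circ> r2) k) i) \<longlonglongrightarrow> (ly(m := l2)) i"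
  proof (intro allI impI)
    fix i assume i: "i < Suc m"
    show "(\<lambda>k. Y ((r \<circ> r2) k) i) \<longlonglongrightarrow> (ly(m := l2)) i"
    proof (cases "i = m")
      case True then show ?thesis using r2(2) by (simp add: o_def)
    next
      case False
      then have "i < m" using i by simp
      then have "(\<lambda>k. Y (r k) i) \<longlonglongrightarrow> ly i" using r(3) by simp
      from LIMSEQ_subseq_LIMSEQ[OF this r2(1)] show ?thesis using False by (simp add: o_def)
    qed
  qed
  ultimately show ?case using sm by blast
qed

lemma conv_from_sq:
  fixes u :: "real \<Rightarrow> 'a::real_normed_vector"
  assumes le: "\<And>t. t \<ge> 0 \<Longrightarrow> (norm (u t - c))\<^sup>2 \<le> K * V t" and K: "K \<ge> 0"
    and V: "(V \<longlongrightarrow> 0) at_top"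
  shows "(u \<longlongrightarrow> c) at_top"
proof -
  have "((\<lambda>t. sqrt (K * V t)) \<longlongrightarrow> sqrt (K * 0)) at_top" by (intro tendsto_intros V)
  then have s0: "((\<lambda>t. sqrt (K * V t)) \<longlongrightarrow> 0) at_top" by simp
  have "eventually (\<lambda>t. norm (u t - c) \<le> sqrt (K * V t)) at_top"
    unfolding eventually_at_top_linorder
  proof (intro exI[of _ 0] allI impI)
    fix t :: real assume "t \<ge> 0"
    then have "sqrt ((norm (u t - c))\<^sup>2) \<le> sqrt (K * V t)" using le by (intro real_sqrt_le_mono) auto
    then show "norm (u t - c) \<le> sqrt (K * V t)" by simp
  qed
  then have "((\<lambda>t. u t - c) \<longlongrightarrow> 0) at_top" using s0 by (rule Lim_null_comparison)
  then show ?thesis by (rule LIM_zero_cancel)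
qed

lemma Qf_le_lap:
  assumes und: "undirected_graph n a" and conn: "graph_connected n a" and n: "n > 0"
  shows "\<exists>C\<ge>0. \<forall>w::nat \<Rightarrow> 'v::real_inner. Qf n a w \<le> C * (\<Sum>i<n. norm (lap n a w i))\<^sup>2"
proof -
  obtain C where C: "C \<ge> 0" and Cp: "\<forall>w::nat \<Rightarrow> 'v. \<forall>i<n. \<forall>j<n. norm (w i - w j) \<le> C * sqrt (Qf n a w)"
    using path_bound[OF und conn, where 'v='v] by blast
  show ?thesis
  proof (intro exI[of _ "C\<^sup>2"] conjI allI)
    show "C\<^sup>2 \<ge> 0" by simp
    fix w :: "nat \<Rightarrow> 'v"
    define L where "L = (\<Sum>i<n. norm (lap n a w i))"
    define q where "q = sqrt (Qf n a w)"
    have Q0: "Qf n a w \<ge> 0" using Qf_nonneg[OF und, of w] by simp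
    have qq: "q\<^sup>2 = Qf n a w" unfolding q_def using Q0 by simp
    have q0: "q \<ge> 0" unfolding q_def using Q0 by simp
    have "Qf n a w = (\<Sum>i<n. (w i - w 0) \<bullet> lap n a w i) + w 0 \<bullet> (\<Sum>i<n. lap n a w i)"
      unfolding Qf_def by (simp add: inner_diff_left sum_subtractf inner_sum_right)
    also have "(\<Sum>i<n. lap n a w i) = 0" by (rule lap_sum_zero[OF und])
    finally have "Qf n a w = (\<Sum>i<n. (w i - w 0) \<bullet> lap n a w i)" by simp
    also have "\<dots> \<le> (\<Sum>i<n. (C * q) * norm (lap n a w i))"
    proof (rule sum_mono)
      fix i assume "i \<in> {..<n}"
      then have i: "i < n" by simp
      have "(w i - w 0) \<bullet> lap n a w i \<le> norm (w i - w 0) * norm (lap n a w i)"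
        by (rule real_inner_class.Cauchy_Schwarz_ineq2[THEN abs_le_D1])
      also have "\<dots> \<le> (C * q) * norm (lap n a w i)"
        using Cp i n unfolding q_def by (intro mult_right_mono) auto
      finally show "(w i - w 0) \<bullet> lap n a w i \<le> (C * q) * norm (lap n a w i)" .
    qed
    also have "\<dots> = q * (C * L)" unfolding L_def by (simp add: sum_distrib_left algebra_simps)
    finally have main: "q\<^sup>2 \<le> q * (C * L)" using qq by simp
    have L0: "L \<ge> 0" unfolding L_def by (intro sum_nonneg) auto
    have "q \<le> C * L"
    proof (cases "q = 0")
      case True then show ?thesis using C L0 by simp
    next
      case False
      then have "q > 0" using q0 by simp
      then show ?thesis using main by (simp add: power2_eq_square)
    qed
    then have "q\<^sup>2 \<le> (C * L)\<^sup>2" using q0 by (intro power_mono) auto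
    then show "Qf n a w \<le> C\<^sup>2 * L\<^sup>2" using qq by (simp add: power_mult_distrib)
  qed
qed

lemma mv_neg:
  fixes M :: "real^'n::finite^'m::finite"
  shows "M *v (- v) = - (M *v v)"
  using matrix_vector_mult_scaleR[of M "-1" v] by simp

context idea begin

lemma AT_cong: "(\<And>i. i < n \<Longrightarrow> u i = w i) \<Longrightarrow> AT u = AT w"
  unfolding AT_def by (intro sum.cong) auto

lemma AT_diff: "AT u - AT w = AT (\<lambda>i. u i - w i)"
  unfolding AT_def by (simp add: sum_subtractf matrix_vector_mult_diff_distrib)

lemma AT_add_const: "AT (\<lambda>_. u + w) = AT (\<lambda>_. u) + AT (\<lambda>_. w)"
  unfolding AT_def by (simp add: sum.distrib matrix_vector_right_distrib)

lemma lap_shift: "lap n a (\<lambda>j. u j - c) i = lap n a u i"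
  unfolding lap_def by simp

lemma AT_tendsto:
  fixes v :: "'k \<Rightarrow> nat \<Rightarrow> real^'p" and w :: "nat \<Rightarrow> real^'p"
  assumes "\<And>i. i < n \<Longrightarrow> ((\<lambda>k. v k i) \<longlongrightarrow> w i) Fl"
  shows "((\<lambda>k. AT (v k)) \<longlongrightarrow> AT w) Fl"
  unfolding AT_def
  by (intro tendsto_sum bounded_linear.tendsto[OF matrix_vector_mul_bounded_linear] assms) simp

lemma lap_tendsto:
  fixes v :: "'k \<Rightarrow> nat \<Rightarrow> real^'p" and w :: "nat \<Rightarrow> real^'p"
  assumes "\<And>j. j < n \<Longrightarrow> ((\<lambda>k. v k j) \<longlongrightarrow> w j) Fl" and i: "i < n"
  shows "((\<lambda>k. lap n a (v k) i) \<longlongrightarrow> lap n a w i) Fl"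
  unfolding lap_def by (intro tendsto_sum tendsto_scaleR tendsto_const tendsto_diff assms i) simp

lemma kkt_ex: "\<exists>xs mu. (\<Sum>i<n. A i *v xs) = b \<and> (\<forall>v. (\<Sum>i<n. A i *v v) = b \<longrightarrow> F xs \<le> F v)
    \<and> G xs + AT (\<lambda>_. mu) = 0"
  by (rule kkt_exists) blast

theorem main:
  "\<exists>xs ls zs. (x \<longlongrightarrow> xs) at_top
           \<and> (\<forall>i<n. ((\<lambda>t. lam t i) \<longlongrightarrow> ls i) at_top)
           \<and> (\<forall>i<n. ((\<lambda>t. z t i) \<longlongrightarrow> zs i) at_top)
           \<and> (\<Sum>i<n. A i *v xs) = b
           \<and> (\<forall>v. (\<Sum>i<n. A i *v v) = b \<longrightarrow> (\<Sum>i<n. f i xs) \<le> (\<Sum>i<n. f i v))"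
proof -
  obtain xs mu where feas: "(\<Sum>i<n. A i *v xs) = b" and opt: "\<And>v. (\<Sum>i<n. A i *v v) = b \<Longrightarrow> F xs \<le> F v"
    and kkt1: "G xs + AT (\<lambda>_. mu) = 0" using kkt_ex by blast
  note kkt = kkt1 feas
  note bx = bounds(1)[OF kkt] and bl = bounds(2)[OF kkt] and bz = bounds(3)[OF kkt]
  note limM = limits(1)[OF kkt] and lime = limits(2)[OF kkt] and limd = limits(3)[OF kkt]
  define X where "X k = x (real k)" for k
  define Y where "Y k i = (if i < n then lam (real k) i else z (real k) (i - n))" for k i
  have bX: "bounded (range X)"
    by (rule bounded_subset[OF bx]) (auto simp: X_def)
  have bY: "bounded (range (\<lambda>k. Y k i))" if i: "i < n + n" for i
  proof (cases "i < n")
    case True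
    show ?thesis by (rule bounded_subset[OF bl[OF True]]) (auto simp: Y_def True)
  next
    case False
    then have i': "i - n < n" using i by simp
    show ?thesis by (rule bounded_subset[OF bz[OF i']]) (auto simp: Y_def False)
  qed
  obtain r xb ly where sm: "strict_mono r" and xr: "(X \<circ> r) \<longlonglongrightarrow> xb"
    and yr: "\<forall>i<n + n. (\<lambda>k. Y (r k) i) \<longlonglongrightarrow> ly i"
    using multi_subseq[of X "n + n" Y, OF bX bY] by blast
  define lb where "lb i = ly i" for i
  define zb where "zb i = ly (n + i)" for i
  define tk where "tk k = real (r k)" for k
  have tk_top: "filterlim tk at_top sequentially"
    unfolding tk_def by (rule filterlim_compose[OF filterlim_real_sequentially filterlim_subseq[OF sm]])
  have tk0: "tk k \<ge> 0" for k unfolding tk_def by simp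
  have comp: "((\<lambda>k. h (tk k)) \<longlongrightarrow> L) sequentially" if "(h \<longlongrightarrow> L) at_top" for h :: "real \<Rightarrow> 'z::topological_space" and L
    using filterlim_compose[OF that tk_top] .
  have xk: "(\<lambda>k. x (tk k)) \<longlonglongrightarrow> xb" using xr unfolding X_def tk_def by (simp add: o_def)
  have lk: "(\<lambda>k. lam (tk k) i) \<longlonglongrightarrow> lb i" if i: "i < n" for i
  proof -
    have "(\<lambda>k. Y (r k) i) \<longlonglongrightarrow> ly i" using yr i by simp
    then show ?thesis unfolding Y_def tk_def lb_def using i by simp
  qed
  have zk: "(\<lambda>k. z (tk k) i) \<longlonglongrightarrow> zb i" if i: "i < n" for i
  proof -
    have "(\<lambda>k. Y (r k) (n + i)) \<longlonglongrightarrow> ly (n + i)" using yr i by simp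
    then show ?thesis unfolding Y_def tk_def zb_def using i by simp
  qed
  have eb: "A i *v xb - bb i - zb i = 0" if i: "i < n" for i
  proof -
    have "(\<lambda>k. e (tk k) i) \<longlonglongrightarrow> A i *v xb - bb i - zb i"
      unfolding e_def by (intro tendsto_diff bounded_linear.tendsto[OF matrix_vector_mul_bounded_linear] xk tendsto_const zk i)
    moreover have "(\<lambda>k. e (tk k) i) \<longlonglongrightarrow> 0" by (rule comp[OF lime[OF i]])
    ultimately show ?thesis by (rule LIMSEQ_unique)
  qed
  have zbq: "zb i = zq xb i" if "i < n" for i using eb[OF that] unfolding zq_def by (simp add: algebra_simps)
  have zbs: "(\<Sum>i<n. zb i) = 0"
  proof -
    have "(\<lambda>k. \<Sum>i<n. z (tk k) i) \<longlonglongrightarrow> (\<Sum>i<n. zb i)" by (intro tendsto_sum zk) simp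
    moreover have "(\<lambda>k. \<Sum>i<n. z (tk k) i) = (\<lambda>k. 0)" using z_sum tk0 by simp
    ultimately show ?thesis using LIMSEQ_unique tendsto_const by metis
  qed
  have feasb: "(\<Sum>i<n. A i *v xb) = b"
  proof -
    have "(\<Sum>i<n. A i *v xb) = (\<Sum>i<n. bb i + zb i)" using eb by (intro sum.cong) (auto simp: algebra_simps)
    also have "\<dots> = b" using bb_sum zbs by (simp add: sum.distrib)
    finally show ?thesis .
  qed
  have isG: "isCont G u" for u using G_cont by (simp add: continuous_on_eq_continuous_at)
  have Mb: "(xb - xs) \<bullet> (G xb - G xs) = 0"
  proof -
    have "(\<lambda>k. (x (tk k) - xs) \<bullet> (G (x (tk k)) - G xs)) \<longlonglongrightarrow> (xb - xs) \<bullet> (G xb - G xs)"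
      by (intro tendsto_inner tendsto_diff xk tendsto_const isCont_tendsto_compose[OF isG])
    moreover have "(\<lambda>k. (x (tk k) - xs) \<bullet> (G (x (tk k)) - G xs)) \<longlonglongrightarrow> 0" by (rule comp[OF limM])
    ultimately show ?thesis by (rule LIMSEQ_unique)
  qed
  have Gb: "G xb = G xs"
  proof -
    have t1: "F xb - F xs - G xs \<bullet> (xb - xs) \<ge> 0" using F_tangent[of xs xb] by simp
    have t2: "F xs - F xb - G xb \<bullet> (xs - xb) \<ge> 0" using F_tangent[of xb xs] by simp
    have "(F xb - F xs - G xs \<bullet> (xb - xs)) + (F xs - F xb - G xb \<bullet> (xs - xb)) = (xb - xs) \<bullet> (G xb - G xs)"
      by (simp add: inner_diff_left inner_diff_right inner_commute)
    then have T1: "F xb - F xs - G xs \<bullet> (xb - xs) = 0" using t1 t2 Mb by linarith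
    define \<phi> where "\<phi> u = F u - F xs - G xs \<bullet> (u - xs)" for u
    have "(\<phi> has_derivative (\<lambda>h. G xb \<bullet> h - G xs \<bullet> h)) (at xb)"
    proof -
      have "((\<lambda>u. F u - F xs - G xs \<bullet> (u - xs)) has_derivative (\<lambda>h. G xb \<bullet> h - 0 - G xs \<bullet> (h - 0))) (at xb)"
        by (intro has_derivative_diff F_der has_derivative_const has_derivative_inner_right has_derivative_ident)
      then show ?thesis unfolding \<phi>_def by simp
    qed
    moreover have "(\<lambda>h. G xb \<bullet> h - G xs \<bullet> h) = (\<lambda>h. (G xb - G xs) \<bullet> h)" by (simp add: inner_diff_left)
    ultimately have dphi: "(\<phi> has_derivative (\<lambda>h. (G xb - G xs) \<bullet> h)) (at xb)" by simp
    have "(G xb - G xs) \<bullet> (G xb - G xs) = 0"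
    proof (rule fermat_dir[OF dphi])
      fix s :: real
      have "\<phi> xb = 0" unfolding \<phi>_def using T1 by simp
      moreover have "\<phi> (xb + s *\<^sub>R (G xb - G xs)) \<ge> 0" unfolding \<phi>_def using F_tangent[of xs "xb + s *\<^sub>R (G xb - G xs)"] by linarith
      ultimately show "\<phi> xb \<le> \<phi> (xb + s *\<^sub>R (G xb - G xs))" by simp
    qed
    then show ?thesis by simp
  qed
  have optb: "F xb \<le> F v" if v: "(\<Sum>i<n. A i *v v) = b" for v
  proof -
    have "G xs \<bullet> (v - xb) = - (AT (\<lambda>_. mu) \<bullet> (v - xb))" using kkt1 by (simp add: eq_neg_iff_add_eq_0[symmetric])
    also have "AT (\<lambda>_. mu) \<bullet> (v - xb) = (\<Sum>i<n. (A i *v (v - xb)) \<bullet> mu)"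
      by (simp add: inner_commute AT_inner)
    also have "\<dots> = (\<Sum>i<n. A i *v v - A i *v xb) \<bullet> mu"
      by (simp add: inner_sum_left matrix_vector_mult_diff_distrib)
    also have "\<dots> = 0" using v feasb by (simp add: sum_subtractf)
    finally have "G xb \<bullet> (v - xb) = 0" using Gb by simp
    then show ?thesis using F_tangent[of xb v] by simp
  qed
  define \<nu> where "\<nu> i = lb i - mu" for i
  define Sv where "Sv = AT \<nu>"
  have Xdk: "(\<lambda>k. Xd (tk k)) \<longlonglongrightarrow> - \<alpha> *\<^sub>R (G xb + AT lb) - AT (\<lambda>i. A i *v xb - bb i - zb i)"
    unfolding Xd_def e_def
    by (intro tendsto_diff tendsto_scaleR tendsto_const tendsto_add isCont_tendsto_compose[OF isG] xk
        AT_tendsto lk bounded_linear.tendsto[OF matrix_vector_mul_bounded_linear] zk)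
  have ATe0: "AT (\<lambda>i. A i *v xb - bb i - zb i) = 0"
  proof -
    have "AT (\<lambda>i. A i *v xb - bb i - zb i) = AT (\<lambda>i. 0)" using eb by (intro AT_cong) auto
    then show ?thesis unfolding AT_def by simp
  qed
  have GAT: "G xb + AT lb = Sv"
  proof -
    have "G xb + AT lb = AT lb - AT (\<lambda>_. mu)" using Gb kkt1 by (simp add: eq_neg_iff_add_eq_0[symmetric] algebra_simps)
    also have "\<dots> = Sv" unfolding Sv_def \<nu>_def AT_diff ..
    finally show ?thesis .
  qed
  have keq: "A i *v Sv = - \<beta> *\<^sub>R lap n a \<nu> i" if i: "i < n" for i
  proof -
    have "(\<lambda>k. A i *v Xd (tk k) - (\<alpha> * \<beta>) *\<^sub>R lap n a (lam (tk k)) i) \<longlonglongrightarrow>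
        A i *v (- \<alpha> *\<^sub>R (G xb + AT lb) - AT (\<lambda>i. A i *v xb - bb i - zb i)) - (\<alpha> * \<beta>) *\<^sub>R lap n a lb i"
      by (intro tendsto_diff bounded_linear.tendsto[OF matrix_vector_mul_bounded_linear] Xdk tendsto_scaleR
          tendsto_const lap_tendsto lk i)
    moreover have "(\<lambda>k. A i *v Xd (tk k) - (\<alpha> * \<beta>) *\<^sub>R lap n a (lam (tk k)) i) \<longlonglongrightarrow> 0"
      by (rule comp[OF limd[OF i]])
    ultimately have "A i *v (- \<alpha> *\<^sub>R (G xb + AT lb) - AT (\<lambda>i. A i *v xb - bb i - zb i)) - (\<alpha> * \<beta>) *\<^sub>R lap n a lb i = 0"
      by (rule LIMSEQ_unique)
    then have h0: "- \<alpha> *\<^sub>R (A i *v Sv) - (\<alpha> * \<beta>) *\<^sub>R lap n a \<nu> i = 0"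
      unfolding ATe0 GAT \<nu>_def lap_shift by (simp add: matrix_vector_mult_scaleR mv_neg)
    have "\<alpha> *\<^sub>R (A i *v Sv + \<beta> *\<^sub>R lap n a \<nu> i) = - (- \<alpha> *\<^sub>R (A i *v Sv) - (\<alpha> * \<beta>) *\<^sub>R lap n a \<nu> i)"
      by (simp add: scaleR_right_distrib)
    then have "\<alpha> *\<^sub>R (A i *v Sv + \<beta> *\<^sub>R lap n a \<nu> i) = 0" unfolding h0 by simp
    then have "A i *v Sv + \<beta> *\<^sub>R lap n a \<nu> i = 0" using \<alpha>_pos by simp
    then show ?thesis by (simp add: eq_neg_iff_add_eq_0)
  qed
  have "Sv \<bullet> Sv = (\<Sum>i<n. (A i *v Sv) \<bullet> \<nu> i)" unfolding Sv_def[symmetric] using AT_inner[of Sv \<nu>] Sv_def by simp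
  also have "\<dots> = (\<Sum>i<n. - \<beta> * (\<nu> i \<bullet> lap n a \<nu> i))" using keq by (intro sum.cong) (auto simp: inner_commute)
  also have "\<dots> = - \<beta> * Qf n a \<nu>" unfolding Qf_def by (simp add: sum_distrib_left)
  finally have SQ: "Sv \<bullet> Sv + \<beta> * Qf n a \<nu> = 0" by simp
  have Qnn: "Qf n a \<nu> \<ge> 0" by (rule Qf_nonneg[OF undir])
  have "Sv \<bullet> Sv \<ge> 0" by simp
  then have Sv0: "Sv = 0" and Q0: "Qf n a \<nu> = 0" using SQ Qnn \<beta>_pos by (auto simp: add_nonneg_eq_0_iff)
  have nucons: "\<nu> i = \<nu> 0" if "i < n" for i using Qf_zero_consensus[OF undir conn Q0 that n_pos] .
  define mub where "mub = mu + \<nu> 0"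
  have lbm: "lb i = mub" if "i < n" for i using nucons[OF that] unfolding mub_def \<nu>_def by (simp add: algebra_simps)
  have kktb: "G xb + AT (\<lambda>_. mub) = 0"
  proof -
    have "AT (\<lambda>_. \<nu> 0) = Sv" unfolding Sv_def by (rule AT_cong) (rule nucons[symmetric])
    then have "AT (\<lambda>_. mub) = AT (\<lambda>_. mu) + Sv" unfolding mub_def AT_add_const by simp
    then show ?thesis using Gb kkt1 Sv0 by (simp add: algebra_simps)
  qed
  obtain W where Wl: "\<And>t i. t \<ge> 0 \<Longrightarrow> i < n \<Longrightarrow> lap n a (W t) i = z t i - zq xb i"
    and Wd: "\<And>t. t \<ge> 0 \<Longrightarrow> (Vf xb mub W has_real_derivative
           (- (\<alpha> * ((x t - xb) \<bullet> (G (x t) - G xb)) + (\<Sum>i<n. (norm (e t i))\<^sup>2)))) (at t within {0..})"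
    using lyap[OF kktb feasb] by blast
  define V where "V = Vf xb mub W"
  obtain CQ where CQ: "CQ \<ge> 0" "\<And>w::nat \<Rightarrow> real^'p. Qf n a w \<le> CQ * (\<Sum>i<n. norm (lap n a w i))\<^sup>2"
    using Qf_le_lap[OF undir conn n_pos, where 'v="real^'p"] by blast
  have Vk: "(\<lambda>k. V (tk k)) \<longlonglongrightarrow> 0"
  proof -
    have p1: "(\<lambda>k. 1/2 * (norm (x (tk k) - xb))\<^sup>2) \<longlonglongrightarrow> 1/2 * (norm (xb - xb))\<^sup>2"
      by (intro tendsto_intros xk)
    have p2: "(\<lambda>k. 1 / (2 * \<alpha>) * (\<Sum>i<n. (norm (\<alpha> *\<^sub>R (lam (tk k) i - mub) + (z (tk k) i - zq xb i)))\<^sup>2))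
        \<longlonglongrightarrow> 1 / (2 * \<alpha>) * (\<Sum>i<n. (norm (\<alpha> *\<^sub>R (lb i - mub) + (zb i - zq xb i)))\<^sup>2)"
      by (intro tendsto_intros lk zk) auto
    have "(\<Sum>i<n. (norm (\<alpha> *\<^sub>R (lb i - mub) + (zb i - zq xb i)))\<^sup>2) = 0"
      using lbm zbq by simp
    then have p2': "(\<lambda>k. 1 / (2 * \<alpha>) * (\<Sum>i<n. (norm (\<alpha> *\<^sub>R (lam (tk k) i - mub) + (z (tk k) i - zq xb i)))\<^sup>2)) \<longlonglongrightarrow> 0"
      using p2 by simp
    have zsum: "(\<lambda>k. CQ * (\<Sum>i<n. norm (z (tk k) i - zq xb i))\<^sup>2) \<longlonglongrightarrow> CQ * (\<Sum>i<n. norm (zb i - zq xb i))\<^sup>2"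
      by (intro tendsto_intros zk) auto
    have "(\<Sum>i<n. norm (zb i - zq xb i)) = 0" using zbq by simp
    then have zsum0: "(\<lambda>k. CQ * (\<Sum>i<n. norm (z (tk k) i - zq xb i))\<^sup>2) \<longlonglongrightarrow> 0" using zsum by simp
    have p3: "(\<lambda>k. Qf n a (W (tk k))) \<longlonglongrightarrow> 0"
    proof (rule tendsto_sandwich[OF _ _ tendsto_const zsum0])
      show "eventually (\<lambda>k. 0 \<le> Qf n a (W (tk k))) sequentially"
        by (rule always_eventually) (simp add: Qf_nonneg[OF undir])
      have "Qf n a (W (tk k)) \<le> CQ * (\<Sum>i<n. norm (z (tk k) i - zq xb i))\<^sup>2" for k
      proof -
        have "(\<Sum>i<n. norm (lap n a (W (tk k)) i)) = (\<Sum>i<n. norm (z (tk k) i - zq xb i))"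
          using Wl tk0 by (intro sum.cong) auto
        then show ?thesis using CQ(2)[of "W (tk k)"] by simp
      qed
      then show "eventually (\<lambda>k. Qf n a (W (tk k)) \<le> CQ * (\<Sum>i<n. norm (z (tk k) i - zq xb i))\<^sup>2) sequentially" by simp
    qed
    have "(\<lambda>k. 1/2 * (norm (x (tk k) - xb))\<^sup>2
        + 1 / (2 * \<alpha>) * (\<Sum>i<n. (norm (\<alpha> *\<^sub>R (lam (tk k) i - mub) + (z (tk k) i - zq xb i)))\<^sup>2)
        + 1 / (2 * \<beta>) * Qf n a (W (tk k))) \<longlonglongrightarrow> 1/2 * (norm (xb - xb))\<^sup>2 + 0 + 1 / (2 * \<beta>) * 0"
      by (intro tendsto_add tendsto_mult p1 p2' p3 tendsto_const)
    then show ?thesis unfolding V_def Vf_def by simp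
  qed
  have Vmono: "V t \<le> V s" if "0 \<le> s" "s \<le> t" for s t unfolding V_def by (rule V_mono[OF Wd that])
  have Vnn: "V t \<ge> 0" for t unfolding V_def by (rule Vf_nonneg)
  have Vlim: "(V \<longlongrightarrow> 0) at_top"
  proof (rule order_tendstoI)
    fix c :: real assume "c < 0"
    then show "eventually (\<lambda>t. c < V t) at_top" using Vnn by (simp add: less_le_trans)
  next
    fix c :: real assume c: "c > 0"
    have "eventually (\<lambda>k. V (tk k) < c) sequentially" using order_tendstoD(2)[OF Vk c] .
    then obtain k where k: "V (tk k) < c" by (auto simp: eventually_sequentially)
    show "eventually (\<lambda>t. V t < c) at_top"
      unfolding eventually_at_top_linorder
    proof (intro exI[of _ "tk k"] allI impI)
      fix t assume "t \<ge> tk k"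
      then have "V t \<le> V (tk k)" using tk0 by (intro Vmono) auto
      then show "V t < c" using k by simp
    qed
  qed
  have xlim: "(x \<longlongrightarrow> xb) at_top"
    by (rule conv_from_sq[of _ _ 2 V]) (use V_parts(1) Vlim in \<open>auto simp: V_def\<close>)
  obtain C where C: "C \<ge> 0" and Cp: "\<And>w::nat \<Rightarrow> real^'p. \<And>i j. i < n \<Longrightarrow> j < n \<Longrightarrow> norm (w i - w j) \<le> C * sqrt (Qf n a w)"
    using path_bound[OF undir conn, where 'v="real^'p"] by blast
  have zlim: "((\<lambda>t. z t i) \<longlongrightarrow> zb i) at_top" if i: "i < n" for i
  proof (rule conv_from_sq[of _ _ "((\<Sum>j<n. a i j) * C)\<^sup>2 * (2 * \<beta>)" V])
    show "((\<Sum>j<n. a i j) * C)\<^sup>2 * (2 * \<beta>) \<ge> 0" using \<beta>_pos by simp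
    show "(V \<longlongrightarrow> 0) at_top" by (rule Vlim)
    fix t :: real assume t: "t \<ge> 0"
    have sa: "(\<Sum>j<n. a i j) \<ge> 0" using undir i unfolding undirected_graph_def by (intro sum_nonneg) auto
    have "norm (z t i - zq xb i) \<le> (\<Sum>j<n. a i j) * (C * sqrt (Qf n a (W t)))"
      by (rule zlap_bound[OF Wl t i C Cp])
    then have "(norm (z t i - zq xb i))\<^sup>2 \<le> ((\<Sum>j<n. a i j) * (C * sqrt (Qf n a (W t))))\<^sup>2"
      by (intro power_mono) auto
    also have "\<dots> = ((\<Sum>j<n. a i j) * C)\<^sup>2 * Qf n a (W t)"
      using Qf_nonneg[OF undir, of "W t"] by (simp add: power_mult_distrib)
    also have "\<dots> \<le> ((\<Sum>j<n. a i j) * C)\<^sup>2 * (2 * \<beta> * V t)"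
      using V_parts(3)[of W t xb mub] unfolding V_def by (intro mult_left_mono) auto
    finally show "(norm (z t i - zb i))\<^sup>2 \<le> ((\<Sum>j<n. a i j) * C)\<^sup>2 * (2 * \<beta>) * V t"
      using zbq[OF i] by (simp add: algebra_simps)
  qed
  have llim: "((\<lambda>t. lam t i) \<longlongrightarrow> mub) at_top" if i: "i < n" for i
  proof -
    have Ulim: "((\<lambda>t. \<alpha> *\<^sub>R (lam t i - mub) + (z t i - zq xb i)) \<longlongrightarrow> 0) at_top"
      by (rule conv_from_sq[of _ _ "2 * \<alpha>" V, simplified]) (use V_parts(2)[OF i] Vlim \<alpha>_pos in \<open>auto simp: V_def\<close>)
    have "((\<lambda>t. z t i - zq xb i) \<longlongrightarrow> zb i - zq xb i) at_top" by (intro tendsto_intros zlim i)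
    then have zl: "((\<lambda>t. z t i - zq xb i) \<longlongrightarrow> 0) at_top" using zbq[OF i] by simp
    have "((\<lambda>t. (1 / \<alpha>) *\<^sub>R ((\<alpha> *\<^sub>R (lam t i - mub) + (z t i - zq xb i)) - (z t i - zq xb i))) \<longlongrightarrow> (1 / \<alpha>) *\<^sub>R (0 - 0)) at_top"
      by (intro tendsto_intros Ulim zl)
    then have "((\<lambda>t. lam t i - mub) \<longlongrightarrow> 0) at_top" using \<alpha>_pos by simp
    then show ?thesis by (rule LIM_zero_cancel)
  qed
  show ?thesis
  proof (rule exI[of _ xb], rule exI[of _ "\<lambda>_. mub"], rule exI[of _ zb], intro conjI allI impI)
    show "(x \<longlongrightarrow> xb) at_top" by (rule xlim)
    show "((\<lambda>t. lam t i) \<longlongrightarrow> mub) at_top" if "i < n" for i using llim[OF that] .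
    show "((\<lambda>t. z t i) \<longlongrightarrow> zb i) at_top" if "i < n" for i using zlim[OF that] .
    show "(\<Sum>i<n. A i *v xb) = b" by (rule feasb)
    show "(\<Sum>i<n. f i xb) \<le> (\<Sum>i<n. f i v)" if "(\<Sum>i<n. A i *v v) = b" for v
      using optb[OF that] unfolding F_def .
  qed
qed

end



theorem theorem1:
  fixes n :: nat
    and blk :: "'d::finite \<Rightarrow> nat"
    and f :: "nat \<Rightarrow> real^'d \<Rightarrow> real"
    and g :: "nat \<Rightarrow> real^'d \<Rightarrow> real^'d"
    and A :: "nat \<Rightarrow> real^'d^'p::finite"
    and b :: "real^'p"
    and bb :: "nat \<Rightarrow> real^'p"
    and a :: "nat \<Rightarrow> nat \<Rightarrow> real"
    and \<alpha> \<beta> :: real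
    and x :: "real \<Rightarrow> real^'d"
    and lam z :: "real \<Rightarrow> nat \<Rightarrow> real^'p"
  assumes blk: "\<forall>k. blk k < n"
    and f_local: "\<forall>i<n. \<forall>u v. (\<forall>k. blk k = i \<longrightarrow> u $ k = v $ k) \<longrightarrow> f i u = f i v"
    and A_local: "\<forall>i<n. \<forall>r k. blk k \<noteq> i \<longrightarrow> A i $ r $ k = 0"
    and f_convex: "\<forall>i<n. convex_on UNIV (f i)"
    and f_grad: "\<forall>i<n. \<forall>u. (f i has_derivative (\<lambda>h. g i u \<bullet> h)) (at u)"
    and g_lip: "\<forall>i<n. loc_lipschitz_on UNIV (g i)"
    and opt_exists: "\<exists>u. (\<Sum>i<n. A i *v u) = b \<and>
                       (\<forall>v. (\<Sum>i<n. A i *v v) = b \<longrightarrow> (\<Sum>i<n. f i u) \<le> (\<Sum>i<n. f i v))"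
    and bb_sum: "(\<Sum>i<n. bb i) = b"
    and undir: "undirected_graph n a"
    and conn: "graph_connected n a"
    and \<alpha>_pos: "\<alpha> > 0" and \<beta>_pos: "\<beta> > 0"
    and z0: "(\<Sum>i<n. z 0 i) = 0"
    and x_ode: "\<forall>t\<ge>0. (x has_vector_derivative
        (- \<alpha> *\<^sub>R ((\<Sum>i<n. g i (x t)) + (\<Sum>i<n. transpose (A i) *v lam t i))
         - (\<Sum>i<n. transpose (A i) *v (A i *v x t - bb i - z t i)))) (at t within {0..})"
    and lam_ode: "\<forall>i<n. \<forall>t\<ge>0. ((\<lambda>s. lam s i) has_vector_derivative
        (A i *v x t - bb i - z t i - \<beta> *\<^sub>R lap n a (lam t) i)) (at t within {0..})"
    and z_ode: "\<forall>i<n. \<forall>t\<ge>0. ((\<lambda>s. z s i) has_vector_derivative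
        ((\<alpha> * \<beta>) *\<^sub>R lap n a (lam t) i)) (at t within {0..})"
  shows "\<exists>xs ls zs. (x \<longlongrightarrow> xs) at_top
           \<and> (\<forall>i<n. ((\<lambda>t. lam t i) \<longlongrightarrow> ls i) at_top)
           \<and> (\<forall>i<n. ((\<lambda>t. z t i) \<longlongrightarrow> zs i) at_top)
           \<and> (\<Sum>i<n. A i *v xs) = b
           \<and> (\<forall>v. (\<Sum>i<n. A i *v v) = b \<longrightarrow> (\<Sum>i<n. f i xs) \<le> (\<Sum>i<n. f i v))"
proof -
  have "blk undefined < n" using blk by blast
  then have n: "n > 0" by simp
  interpret idea n f g A b bb a \<alpha> \<beta> x lam z
    by (rule idea.intro[OF n f_convex f_grad g_lip opt_exists bb_sum undir conn \<alpha>_pos \<beta>_pos z0 x_ode lam_ode z_ode])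
  show ?thesis by (rule main)
qed

end
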